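(* Let $m\ge2$, let $\mathcal H_1,\dots,\mathcal H_m$ be real Hilbert spaces, $\boldsymbol{\mathcal H}=\mathcal H_1\oplus\cdots\oplus\mathcal H_m$, and let $\boldsymbol C\subset\boldsymbol{\mathcal H}$ be nonempty closed convex. For every $i$ let $\boldsymbol g_i:\boldsymbol{\mathcal H}\to\left]-\infty,+\infty\right]$ be such that for every $(x_1,\dots,x_m)$ the function $x\mapsto\boldsymbol g_i(x_1,\dots,x_{i-1},x,x_{i+1},\dots,x_m)$ is real-valued and differentiable on $\mathcal H_i$, with gradient $\nabla_i\boldsymbol g_i(x_1,\dots,x_m)$ at $x_i$, and assume $\sum_i\langle\nabla_i\boldsymbol g_i(\boldsymbol x)-\nabla_i\boldsymbol g_i(\boldsymbol y),x_i-y_i\rangle\ge0$ for all $\boldsymbol x,\boldsymbol y\in\boldsymbol{\mathcal H}$. For $i\in\{1,\dots,m\}$ and $(x_1,\dots,x_m)\in\boldsymbol{\mathcal H}$ set $\boldsymbol Q_i(x_1,\dots,x_{i-1},x_{i+1},\dots,x_m)=\{x\in\mathcal H_i:(x_1,\dots,x_{i-1},x,x_{i+1},\dots,x_m)\in\boldsymbol C\}$. Suppose there exists $(z_1,\dots,z_m)\in\boldsymbol{\mathcal H}$ with $-\big(\nabla_1\boldsymbol g_1(z_1,\dots,z_m),\dots,\nabla_m\boldsymbol g_m(z_1,\dots,z_m)\big)\in N_{\boldsymbol C}(z_1,\dots,z_m)$, and $\chi\in]0,+\infty[$ with $\sum_i\|\nabla_i\boldsymbol g_i(\boldsymbol x)-\nabla_i\boldsymbol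 g_i(\boldsymbol y)\|^2\le\chi^2\sum_i\|x_i-y_i\|^2$ for all $\boldsymbol x,\boldsymbol y$. Let $\varepsilon\in]0,1/(\chi+1)[$, $(\gamma_n)_n$ a sequence in $[\varepsilon,(1-\varepsilon)/\chi]$, $x_{i,0}\in\mathcal H_i$, and $(a_{i,n})_n,(b_{i,n})_n,(c_{i,n})_n$ absolutely summable sequences in $\mathcal H_i$. For every $n$ define $y_{i,n}=x_{i,n}-\gamma_n(\nabla_i\boldsymbol g_i(x_{1,n},\dots,x_{m,n})+a_{i,n})$, $(p_{1,n},\dots,p_{m,n})=P_{\boldsymbol C}(y_{1,n},\dots,y_{m,n})+(b_{1,n},\dots,b_{m,n})$, $q_{i,n}=p_{i,n}-\gamma_n(\nabla_i\boldsymbol g_i(p_{1,n},\dots,p_{m,n})+c_{i,n})$, $x_{i,n+1}=x_{i,n}-y_{i,n}+q_{i,n}$. Then there exists $(\overline x_1,\dots,\overline x_m)$ such that for every $i$, $\overline x_i\in\operatorname{Argmin}_{x\in\boldsymbol Q_i(\overline x_1,\dots,\overline x_{i-1},\overline x_{i+1},\dots,\overline x_m)}\boldsymbol g_i(\overline x_1,\dots,\overline x_{i-1},x,\overline x_{i+1},\dots,\overline x_m)$ (a generalized Nash equilibrium), and $x_{i,n}\rightharpoonup\overline x_i$, $p_{i,n}\rightharpoonup\overline x_i$.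
   Context: $\boldsymbol{\mathcal H}$ carries the inner product $\sum_i\langle x_i,y_i\rangle$. $P_{\boldsymbol C}$ is the metric projection onto $\boldsymbol C$ and $N_{\boldsymbol C}$ its normal cone: $N_{\boldsymbol C}\boldsymbol x=\{\boldsymbol u:\langle\langle\boldsymbol y-\boldsymbol x,\boldsymbol u\rangle\rangle\le0\ \forall\boldsymbol y\in\boldsymbol C\}$ if $\boldsymbol x\in\boldsymbol C$, empty otherwise. $\rightharpoonup$ denotes weak convergence. *)

theory Defs
  imports "HOL-Analysis.Analysis"
begin

text \<open>The Hilbert spaces H_1,...,H_m are modelled as closed linear subspaces H i of one
real Hilbert space 'a (every family of Hilbert spaces embeds isometrically into its direct sum).\<close>

definition hilbert_family :: "nat \<Rightarrow> (nat \<Rightarrow> ('a::{real_inner,complete_space}) set) \<Rightarrow> bool" where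
  "hilbert_family m H \<longleftrightarrow> (\<forall>i\<in>{1..m}. subspace (H i) \<and> closed (H i))"

definition dsum :: "nat \<Rightarrow> (nat \<Rightarrow> ('a::zero) set) \<Rightarrow> (nat \<Rightarrow> 'a) set" where
  "dsum m H = {x. (\<forall>i\<in>{1..m}. x i \<in> H i) \<and> (\<forall>i. i \<notin> {1..m} \<longrightarrow> x i = 0)}"

definition dinner :: "nat \<Rightarrow> (nat \<Rightarrow> 'a::real_inner) \<Rightarrow> (nat \<Rightarrow> 'a) \<Rightarrow> real" where
  "dinner m x y = (\<Sum>i\<in>{1..m}. inner (x i) (y i))"

definition dnorm2 :: "nat \<Rightarrow> (nat \<Rightarrow> 'a::real_normed_vector) \<Rightarrow> real" where
  "dnorm2 m x = (\<Sum>i\<in>{1..m}. (norm (x i))\<^sup>2)"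

definition dconvex :: "(nat \<Rightarrow> 'a::real_vector) set \<Rightarrow> bool" where
  "dconvex C \<longleftrightarrow> (\<forall>x\<in>C. \<forall>y\<in>C. \<forall>t::real. 0 \<le> t \<and> t \<le> 1 \<longrightarrow>
                    (\<lambda>i. (1 - t) *\<^sub>R x i + t *\<^sub>R y i) \<in> C)"

text \<open>Closedness of C in the norm topology of the direct sum (sequential closedness,
which is equivalent in a normed space).\<close>
definition dclosed :: "nat \<Rightarrow> (nat \<Rightarrow> ('a::real_normed_vector) set) \<Rightarrow> (nat \<Rightarrow> 'a) set \<Rightarrow> bool" where
  "dclosed m H C \<longleftrightarrow> (\<forall>s z. (\<forall>n. s n \<in> C) \<and> z \<in> dsum m H \<and>
        (\<lambda>n. sqrt (dnorm2 m (\<lambda>i. s n i - z i))) \<longlonglongrightarrow> 0 \<longrightarrow> z \<in> C)"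

text \<open>Metric projection onto C (the nearest point; it exists and is unique for
nonempty closed convex C).\<close>
definition dproj :: "nat \<Rightarrow> (nat \<Rightarrow> 'a::real_normed_vector) set \<Rightarrow> (nat \<Rightarrow> 'a) \<Rightarrow> (nat \<Rightarrow> 'a)" where
  "dproj m C y = (SOME p. p \<in> C \<and> (\<forall>c\<in>C. dnorm2 m (\<lambda>i. y i - p i) \<le> dnorm2 m (\<lambda>i. y i - c i)))"

definition normal_cone :: "nat \<Rightarrow> (nat \<Rightarrow> 'a::real_inner) set \<Rightarrow> (nat \<Rightarrow> 'a) \<Rightarrow> (nat \<Rightarrow> 'a) set" where
  "normal_cone m C x = (if x \<in> C then {u. \<forall>y\<in>C. dinner m (\<lambda>i. y i - x i) u \<le> 0} else {})"

definition Qset :: "nat \<Rightarrow> (nat \<Rightarrow> 'a set) \<Rightarrow> (nat \<Rightarrow> 'a) set \<Rightarrow> (nat \<Rightarrow> 'a) \<Rightarrow> 'a set" where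
  "Qset i H C x = {t \<in> H i. x(i := t) \<in> C}"

definition Argmin :: "('b \<Rightarrow> real) \<Rightarrow> 'b set \<Rightarrow> 'b set" where
  "Argmin f S = {x \<in> S. \<forall>y\<in>S. f x \<le> f y}"

definition weakly_converges :: "(nat \<Rightarrow> 'a::real_inner) \<Rightarrow> 'a \<Rightarrow> bool" where
  "weakly_converges s l \<longleftrightarrow> (\<forall>y. (\<lambda>n. inner (s n) y) \<longlonglongrightarrow> inner l y)"

end

theory Submission
  imports Defs "HOL-Library.Diagonal_Subsequence"
begin

typedef (overloaded) 'a fsv = "{f :: nat \<Rightarrow> 'a::real_inner. finite {i. f i \<noteq> 0}}"
  morphisms vf mkv
  by (rule exI[of _ "\<lambda>_. 0"]) auto

setup_lifting type_definition_fsv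

lemma fin_supp_add: "finite {i. f i \<noteq> 0} \<Longrightarrow> finite {i. g i \<noteq> 0} \<Longrightarrow> finite {i. (f i::'a::real_vector) + g i \<noteq> 0}"
  by (rule finite_subset[of _ "{i. f i \<noteq> 0} \<union> {i. g i \<noteq> 0}"]) auto
lemma fin_supp_diff: "finite {i. f i \<noteq> 0} \<Longrightarrow> finite {i. g i \<noteq> 0} \<Longrightarrow> finite {i. (f i::'a::real_vector) - g i \<noteq> 0}"
  by (rule finite_subset[of _ "{i. f i \<noteq> 0} \<union> {i. g i \<noteq> 0}"]) auto

instantiation fsv :: (real_inner) ab_group_add
begin
lift_definition zero_fsv :: "'a fsv" is "\<lambda>_. 0" by simp
lift_definition plus_fsv :: "'a fsv \<Rightarrow> 'a fsv \<Rightarrow> 'a fsv" is "\<lambda>f g i. f i + g i"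
  by (rule fin_supp_add)
lift_definition minus_fsv :: "'a fsv \<Rightarrow> 'a fsv \<Rightarrow> 'a fsv" is "\<lambda>f g i. f i - g i"
  by (rule fin_supp_diff)
lift_definition uminus_fsv :: "'a fsv \<Rightarrow> 'a fsv" is "\<lambda>f i. - f i" by simp
instance by standard (transfer; auto simp: algebra_simps fun_eq_iff)+
end

instantiation fsv :: (real_inner) real_vector
begin
lift_definition scaleR_fsv :: "real \<Rightarrow> 'a fsv \<Rightarrow> 'a fsv" is "\<lambda>c f i. c *\<^sub>R f i"
  by (rule finite_subset[of _ "{i. f i \<noteq> 0}" for f]) auto
instance by standard (transfer; auto simp: algebra_simps fun_eq_iff)+
end

definition supp :: "'a::real_inner fsv \<Rightarrow> nat set" where "supp x = {i. vf x i \<noteq> 0}"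

lemma finite_supp[simp]: "finite (supp x)"
  using vf[of x] by (simp add: supp_def)

definition fip :: "'a::real_inner fsv \<Rightarrow> 'a fsv \<Rightarrow> real" where
  "fip x y = (\<Sum>i\<in>supp x. inner (vf x i) (vf y i))"

lemma fip_superset: "finite A \<Longrightarrow> supp x \<subseteq> A \<Longrightarrow> fip x y = (\<Sum>i\<in>A. inner (vf x i) (vf y i))"
  unfolding fip_def by (rule sum.mono_neutral_left) (auto simp: supp_def)

lemma fip_superset2: "finite A \<Longrightarrow> supp y \<subseteq> A \<Longrightarrow> fip x y = (\<Sum>i\<in>A. inner (vf x i) (vf y i))"
proof -
  assume a: "finite A" "supp y \<subseteq> A"
  have "fip x y = (\<Sum>i\<in>A \<union> supp x. inner (vf x i) (vf y i))"
    by (rule fip_superset) (use a in auto)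
  also have "\<dots> = (\<Sum>i\<in>A. inner (vf x i) (vf y i))"
  proof (rule sum.mono_neutral_right)
    show "finite (A \<union> supp x)" using a by simp
    show "\<forall>i\<in>A \<union> supp x - A. vf x i \<bullet> vf y i = 0" using a unfolding supp_def by (metis (mono_tags, lifting) DiffE inner_zero_right mem_Collect_eq subsetD)
  qed auto
  finally show ?thesis .
qed

lemma fip_commute: "fip x y = fip y x"
proof -
  have "fip x y = (\<Sum>i\<in>supp x \<union> supp y. inner (vf x i) (vf y i))" by (rule fip_superset) auto
  moreover have "fip y x = (\<Sum>i\<in>supp x \<union> supp y. inner (vf y i) (vf x i))" by (rule fip_superset) auto
  ultimately show ?thesis by (simp add: inner_commute)
qed

lemma fip_add_left: "fip (x + y) z = fip x z + fip y z"
proof -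
  have "fip (x + y) z = (\<Sum>i\<in>supp z. inner (vf (x + y) i) (vf z i))"
    by (rule fip_superset2) auto
  also have "\<dots> = (\<Sum>i\<in>supp z. inner (vf x i) (vf z i) + inner (vf y i) (vf z i))"
    unfolding plus_fsv.rep_eq inner_add_left ..
  also have "\<dots> = (\<Sum>i\<in>supp z. inner (vf x i) (vf z i)) + (\<Sum>i\<in>supp z. inner (vf y i) (vf z i))"
    by (rule sum.distrib)
  also have "\<dots> = fip x z + fip y z"
    using fip_superset2[of "supp z" z x] fip_superset2[of "supp z" z y] by simp
  finally show ?thesis .
qed

lemma fip_scale_left: "fip (r *\<^sub>R x) y = r * fip x y"
proof -
  have "fip (r *\<^sub>R x) y = (\<Sum>i\<in>supp y. inner (vf (r *\<^sub>R x) i) (vf y i))"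
    by (rule fip_superset2) auto
  also have "\<dots> = r * (\<Sum>i\<in>supp y. inner (vf x i) (vf y i))"
    unfolding scaleR_fsv.rep_eq inner_scaleR_left sum_distrib_left ..
  also have "\<dots> = r * fip x y"
    using fip_superset2[of "supp y" y x] by simp
  finally show ?thesis .
qed

lemma fip_self: "fip x x = (\<Sum>i\<in>supp x. (norm (vf x i))\<^sup>2)"
  unfolding fip_def power2_norm_eq_inner ..

lemma fip_ge0: "fip x x \<ge> 0"
  unfolding fip_self by (rule sum_nonneg) simp

lemma fip_eq0: "fip x x = 0 \<longleftrightarrow> x = 0"
proof
  assume "fip x x = 0"
  then have "\<forall>i\<in>supp x. (norm (vf x i))\<^sup>2 = 0"
    unfolding fip_self by (subst (asm) sum_nonneg_eq_0_iff) auto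
  then have "\<forall>i. vf x i = 0" by (auto simp: supp_def)
  then have "vf x = vf 0" by (auto simp: zero_fsv.rep_eq)
  then show "x = 0" by (simp add: vf_inject)
next
  assume "x = 0"
  then show "fip x x = 0" by (simp add: fip_def zero_fsv.rep_eq)
qed

instantiation fsv :: (real_inner) real_inner
begin
definition inner_fsv :: "'a fsv \<Rightarrow> 'a fsv \<Rightarrow> real" where "inner_fsv = fip"
definition norm_fsv :: "'a fsv \<Rightarrow> real" where "norm_fsv x = sqrt (fip x x)"
definition sgn_fsv :: "'a fsv \<Rightarrow> 'a fsv" where "sgn_fsv x = x /\<^sub>R norm x"
definition dist_fsv :: "'a fsv \<Rightarrow> 'a fsv \<Rightarrow> real" where "dist_fsv x y = norm (x - y)"
definition uniformity_fsv :: "('a fsv \<times> 'a fsv) filter" where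
  "uniformity_fsv = (INF e\<in>{0<..}. principal {(x, y). dist x y < e})"
definition open_fsv :: "'a fsv set \<Rightarrow> bool" where
  "open_fsv U = (\<forall>x\<in>U. \<forall>\<^sub>F (x', y) in uniformity. x' = x \<longrightarrow> y \<in> U)"
instance
proof
  fix x y z :: "'a fsv" and r :: real
  show "inner x y = inner y x" by (simp add: inner_fsv_def fip_commute)
  show "inner (x + y) z = inner x z + inner y z" by (simp add: inner_fsv_def fip_add_left)
  show "inner (r *\<^sub>R x) y = r * inner x y" by (simp add: inner_fsv_def fip_scale_left)
  show "0 \<le> inner x x" by (simp add: inner_fsv_def fip_ge0)
  show "inner x x = 0 \<longleftrightarrow> x = 0" by (simp add: inner_fsv_def fip_eq0)
  show "norm x = sqrt (inner x x)" by (simp add: inner_fsv_def norm_fsv_def)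
  show "dist x y = norm (x - y)" by (simp add: dist_fsv_def)
  show "sgn x = x /\<^sub>R norm x" by (simp add: sgn_fsv_def)
  show "uniformity = (INF e\<in>{0<..}. principal {(x, y::'a fsv). dist x y < e})"
    unfolding uniformity_fsv_def ..
  show "open U = (\<forall>x\<in>U. \<forall>\<^sub>F (x', y) in uniformity. x' = x \<longrightarrow> y \<in> U)" for U :: "'a fsv set"
    unfolding open_fsv_def ..
qed
end

lemma min_exists:
  fixes C :: "'b::real_inner set" and \<phi> :: "'b \<Rightarrow> real"
  assumes conv: "convex C" and comp: "complete C" and ne: "C \<noteq> {}"
    and bdd: "\<And>x. x \<in> C \<Longrightarrow> L \<le> \<phi> x"
    and cont: "\<And>s x. (\<And>n. s n \<in> C) \<Longrightarrow> x \<in> C \<Longrightarrow> s \<longlonglongrightarrow> x \<Longrightarrow> (\<lambda>n. \<phi> (s n)) \<longlonglongrightarrow> \<phi> x"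
    and par: "\<And>x y. x \<in> C \<Longrightarrow> y \<in> C \<Longrightarrow>
                (norm (x - y))\<^sup>2 \<le> 2 * \<phi> x + 2 * \<phi> y - 4 * \<phi> ((1/2) *\<^sub>R (x + y))"
  shows "\<exists>x\<in>C. \<forall>y\<in>C. \<phi> x \<le> \<phi> y"
proof -
  define d where "d = Inf (\<phi> ` C)"
  have bb: "bdd_below (\<phi> ` C)" using bdd by (auto intro!: bdd_belowI)
  have dle: "d \<le> \<phi> y" if "y \<in> C" for y
    unfolding d_def using bb that by (auto intro: cInf_lower)
  have "\<exists>x\<in>C. \<phi> x < d + inverse (real (Suc k))" for k
  proof -
    have "Inf (\<phi> ` C) < d + inverse (real (Suc k))" unfolding d_def by simp
    then show ?thesis using ne bb by (subst (asm) cInf_less_iff) auto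
  qed
  then obtain s where s: "\<And>k. s k \<in> C" "\<And>k. \<phi> (s k) < d + inverse (real (Suc k))"
    by metis
  have mid: "(1/2) *\<^sub>R (x + y) \<in> C" if "x \<in> C" "y \<in> C" for x y
  proof -
    have "(1/2) *\<^sub>R x + (1/2) *\<^sub>R y \<in> C"
      using conv that unfolding convex_def by auto
    then show ?thesis by (simp add: scaleR_add_right)
  qed
  have "Cauchy s"
  proof (rule metric_CauchyI)
    fix e :: real assume e: "e > 0"
    obtain N where N: "inverse (real (Suc N)) < e\<^sup>2 / 4"
      using reals_Archimedean[of "e\<^sup>2/4"] e by auto
    have "dist (s m) (s n) < e" if "m \<ge> N" "n \<ge> N" for m n
    proof -
      have im: "inverse (real (Suc m)) \<le> inverse (real (Suc N))"
        using that by (simp add: le_imp_inverse_le)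
      have inn: "inverse (real (Suc n)) \<le> inverse (real (Suc N))"
        using that by (simp add: le_imp_inverse_le)
      have "(norm (s m - s n))\<^sup>2 \<le> 2 * \<phi> (s m) + 2 * \<phi> (s n) - 4 * \<phi> ((1/2) *\<^sub>R (s m + s n))"
        using par s by auto
      also have "\<dots> < e\<^sup>2"
        using s(2)[of m] s(2)[of n] dle[OF mid[OF s(1)[of m] s(1)[of n]]] im inn N by linarith
      finally have "(norm (s m - s n))\<^sup>2 < e\<^sup>2" .
      then have "norm (s m - s n) < e" using e by (simp add: power_less_imp_less_base)
      then show ?thesis by (simp add: dist_norm)
    qed
    then show "\<exists>M. \<forall>m\<ge>M. \<forall>n\<ge>M. dist (s m) (s n) < e" by blast
  qed
  then obtain l where l: "l \<in> C" "s \<longlonglongrightarrow> l"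
    using comp s(1) unfolding complete_def by blast
  have t1: "(\<lambda>n. \<phi> (s n)) \<longlonglongrightarrow> \<phi> l" using cont[OF s(1) l] .
  have t2: "(\<lambda>n. \<phi> (s n)) \<longlonglongrightarrow> d"
  proof (rule real_tendsto_sandwich[of "\<lambda>n. d" _ _ "\<lambda>n. d + inverse (real (Suc n))"])
    show "\<forall>\<^sub>F n in sequentially. d \<le> \<phi> (s n)" using dle s(1) by auto
    show "\<forall>\<^sub>F n in sequentially. \<phi> (s n) \<le> d + inverse (real (Suc n))"
      using s(2) less_imp_le by (intro always_eventually) blast
    show "(\<lambda>n. d) \<longlonglongrightarrow> d" by simp
    show "(\<lambda>n. d + inverse (real (Suc n))) \<longlonglongrightarrow> d"
      using tendsto_add[OF tendsto_const[of d] LIMSEQ_inverse_real_of_nat] by simp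
  qed
  have "\<phi> l = d" using LIMSEQ_unique[OF t1 t2] .
  then show ?thesis using l(1) dle by auto
qed


lemma parallelogram: "(norm (x - y))\<^sup>2 = 2 * (norm x)\<^sup>2 + 2 * (norm y)\<^sup>2 - (norm (x + y))\<^sup>2"
  for x y :: "'b::real_inner"
  by (simp add: power2_norm_eq_inner inner_simps inner_commute)

lemma norm_half_sq: "(norm ((1/2) *\<^sub>R (x::'b::real_inner)))\<^sup>2 = (norm x)\<^sup>2 / 4"
  by (simp add: power2_eq_square)

lemma riesz_sub:
  fixes V :: "'b::real_inner set" and f :: "'b \<Rightarrow> real"
  assumes sub: "subspace V" and comp: "complete V"
    and fadd: "\<And>u v. u \<in> V \<Longrightarrow> v \<in> V \<Longrightarrow> f (u + v) = f u + f v"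
    and fscale: "\<And>u c. u \<in> V \<Longrightarrow> f (c *\<^sub>R u) = c * f u"
    and bd: "\<And>v. v \<in> V \<Longrightarrow> \<bar>f v\<bar> \<le> K * norm v"
  shows "\<exists>xb\<in>V. \<forall>v\<in>V. inner xb v = f v"
proof -
  define \<phi> where "\<phi> x = (norm x)\<^sup>2 - 2 * f x" for x
  have fdiff: "f (u - v) = f u - f v" if "u \<in> V" "v \<in> V" for u v
  proof -
    have e: "u - v = u + (-1) *\<^sub>R v" by simp
    have "(-1) *\<^sub>R v \<in> V" using sub that(2) by (rule subspace_scale)
    then have "f (u - v) = f u + f ((-1) *\<^sub>R v)" using e fadd that(1) by metis
    then show ?thesis using fscale[OF that(2), of "-1"] by simp
  qed
  have "\<exists>x\<in>V. \<forall>y\<in>V. \<phi> x \<le> \<phi> y"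
  proof (rule min_exists[where L = "- K\<^sup>2"])
    show "convex V" using sub by (rule subspace_imp_convex)
    show "complete V" by fact
    show "V \<noteq> {}" using sub subspace_0 by auto
    show "- K\<^sup>2 \<le> \<phi> x" if "x \<in> V" for x
    proof -
      have "f x \<le> K * norm x" using bd[OF that] by simp
      moreover have "0 \<le> (norm x - K)\<^sup>2" by simp
      ultimately show ?thesis unfolding \<phi>_def by (simp add: power2_eq_square algebra_simps)
    qed
    show "(\<lambda>n. \<phi> (s n)) \<longlonglongrightarrow> \<phi> x" if s: "\<And>n. s n \<in> V" "x \<in> V" "s \<longlonglongrightarrow> x" for s x
    proof -
      have "(\<lambda>n. f (s n) - f x) \<longlonglongrightarrow> 0"
      proof (rule tendsto_0_le[where K = K and f = "\<lambda>n. s n - x"])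
        show "(\<lambda>n. s n - x) \<longlonglongrightarrow> 0" using s(3) by (simp add: LIM_zero)
        show "\<forall>\<^sub>F n in sequentially. norm (f (s n) - f x) \<le> norm (s n - x) * K"
          using bd fdiff s(1,2) sub by (intro always_eventually allI)
            (metis mult.commute real_norm_def subspace_diff)
      qed
      then have "(\<lambda>n. f (s n)) \<longlonglongrightarrow> f x" by (simp add: LIM_zero_iff)
      then show ?thesis unfolding \<phi>_def
        by (intro tendsto_intros s(3))
    qed
    show "(norm (x - y))\<^sup>2 \<le> 2 * \<phi> x + 2 * \<phi> y - 4 * \<phi> ((1/2) *\<^sub>R (x + y))"
      if "x \<in> V" "y \<in> V" for x y
    proof -
      have "f ((1/2) *\<^sub>R (x + y)) = (1/2) * (f x + f y)"
        using fscale fadd that sub by (simp add: subspace_add)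
      then show ?thesis unfolding \<phi>_def parallelogram[of x y] norm_half_sq by simp
    qed
  qed
  then obtain xb where xb: "xb \<in> V" "\<And>y. y \<in> V \<Longrightarrow> \<phi> xb \<le> \<phi> y" by blast
  have "inner xb v = f v" if v: "v \<in> V" for v
  proof -
    define a where "a = inner xb v - f v"
    define N where "N = (norm v)\<^sup>2"
    have N0: "N \<ge> 0" unfolding N_def by simp
    have key: "0 \<le> 2 * t * a + t\<^sup>2 * N" for t
    proof -
      have "xb + t *\<^sub>R v \<in> V" using sub xb v by (simp add: subspace_add subspace_scale)
      then have "\<phi> xb \<le> \<phi> (xb + t *\<^sub>R v)" by (rule xb(2))
      moreover have "f (xb + t *\<^sub>R v) = f xb + t * f v"
        using fadd fscale xb v sub by (simp add: subspace_scale)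
      moreover have "(norm (xb + t *\<^sub>R v))\<^sup>2 = (norm xb)\<^sup>2 + 2 * t * inner xb v + t\<^sup>2 * (norm v)\<^sup>2"
        unfolding power2_norm_eq_inner by (simp add: inner_simps inner_commute algebra_simps power2_eq_square)
      ultimately show ?thesis unfolding \<phi>_def a_def N_def
        by (simp add: algebra_simps)
    qed
    define t where "t = - a / (N + 1)"
    have at: "a = - t * (N + 1)" unfolding t_def using N0 by (simp add: field_simps)
    have "0 \<le> 2 * t * a + t\<^sup>2 * N" by (rule key)
    also have "\<dots> = - (t\<^sup>2 * (N + 2))" unfolding at by (simp add: algebra_simps power2_eq_square)
    finally have "t\<^sup>2 * (N + 2) \<le> 0" by simp
    then have "t\<^sup>2 \<le> 0" using N0 by (simp add: mult_le_0_iff)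
    then have "t = 0" by simp
    then have "a = 0" using at by simp
    then show ?thesis unfolding a_def by simp
  qed
  then show ?thesis using xb(1) by blast
qed

lemma proj_exists:
  fixes C :: "'b::real_inner set"
  assumes "convex C" "complete C" "C \<noteq> {}"
  shows "\<exists>p\<in>C. \<forall>c\<in>C. norm (y - p) \<le> norm (y - c)"
proof -
  have "\<exists>x\<in>C. \<forall>c\<in>C. (\<lambda>c. (norm (y - c))\<^sup>2) x \<le> (\<lambda>c. (norm (y - c))\<^sup>2) c"
  proof (rule min_exists[where L = 0])
    show "(\<lambda>n. (norm (y - s n))\<^sup>2) \<longlonglongrightarrow> (norm (y - x))\<^sup>2" if "s \<longlonglongrightarrow> x" for s x
      by (intro tendsto_intros that)
    show "(norm (x - z))\<^sup>2 \<le> 2 * (norm (y - x))\<^sup>2 + 2 * (norm (y - z))\<^sup>2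
          - 4 * (norm (y - (1/2) *\<^sub>R (x + z)))\<^sup>2" for x z
    proof -
      have "(y - x) + (y - z) = (y + y) - (x + z)" by (simp add: algebra_simps)
      then have "(1/2) *\<^sub>R ((y - x) + (y - z)) = (1/2) *\<^sub>R (y + y) - (1/2) *\<^sub>R (x + z)"
        by (simp only: scaleR_diff_right)
      then have "y - (1/2) *\<^sub>R (x + z) = (1/2) *\<^sub>R ((y - x) + (y - z))" by simp
      then have "(norm (y - (1/2) *\<^sub>R (x + z)))\<^sup>2 = (norm ((y - x) + (y - z)))\<^sup>2 / 4"
        using norm_half_sq by metis
      moreover have "x - z = (y - z) - (y - x)" by simp
      ultimately show ?thesis using parallelogram[of "y - z" "y - x"] by (simp add: add.commute)
    qed
  qed (use assms in auto)
  then show ?thesis by (auto intro: power2_le_imp_le)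
qed

lemma proj_vi:
  fixes C :: "'b::real_inner set"
  assumes conv: "convex C" and p: "p \<in> C" and min: "\<And>c. c \<in> C \<Longrightarrow> norm (y - p) \<le> norm (y - c)"
    and c: "c \<in> C"
  shows "inner (c - p) (y - p) \<le> 0"
proof (rule ccontr)
  define a where "a = inner (c - p) (y - p)"
  define N where "N = (norm (c - p))\<^sup>2"
  assume "\<not> inner (c - p) (y - p) \<le> 0"
  then have a0: "a > 0" unfolding a_def by simp
  have N0: "N \<ge> 0" unfolding N_def by simp
  define t where "t = min 1 (a / (N + 1))"
  have t0: "t > 0" unfolding t_def using a0 N0 by simp
  have t1: "t \<le> 1" unfolding t_def by simp
  have "(1 - t) *\<^sub>R p + t *\<^sub>R c \<in> C"
    using conv p c t0 t1 unfolding convex_def by auto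
  moreover have "(1 - t) *\<^sub>R p + t *\<^sub>R c = p + t *\<^sub>R (c - p)" by (simp add: algebra_simps)
  ultimately have "norm (y - p) \<le> norm (y - (p + t *\<^sub>R (c - p)))" using min by metis
  then have "(norm (y - p))\<^sup>2 \<le> (norm ((y - p) - t *\<^sub>R (c - p)))\<^sup>2"
    by (simp add: power_mono algebra_simps)
  also have "\<dots> = (norm (y - p))\<^sup>2 - 2 * t * a + t\<^sup>2 * N"
    unfolding a_def N_def power2_norm_eq_inner
    by (simp add: inner_simps inner_commute algebra_simps power2_eq_square)
  finally have "2 * t * a \<le> t * (t * N)" by (simp add: power2_eq_square)
  then have h: "2 * a \<le> t * N" using t0 by simp
  show False
  proof (cases "a / (N + 1) \<le> 1")
    case True
    then have "t = a / (N + 1)" unfolding t_def by simp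
    then have ta: "t * (N + 1) = a" using N0 by (simp add: field_simps)
    have "2 * a * (N + 1) \<le> (t * N) * (N + 1)" using h N0 by (simp add: mult_right_mono)
    also have "\<dots> = N * a" using ta by (simp add: algebra_simps)
    finally have "a * (N + 2) \<le> 0" by (simp add: algebra_simps)
    moreover have "a * (N + 2) > 0" using a0 N0 by simp
    ultimately show False by simp
  next
    case False
    then have "t = 1" "a > N + 1" using N0 unfolding t_def by (auto simp: field_simps)
    then show False using h a0 N0 by simp
  qed
qed

lemma diag_inner:
  fixes s :: "nat \<Rightarrow> 'b::real_inner"
  assumes bd: "\<And>n. norm (s n) \<le> K"
  shows "\<exists>r. strict_mono r \<and> (\<forall>j. convergent (\<lambda>n. inner (s (r n)) (s j)))"
proof -
  define P where "P = (\<lambda>j (r::nat\<Rightarrow>nat). convergent (\<lambda>n. inner (s (r n)) (s j)))"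
  interpret subseqs P
  proof
    fix j and \<sigma> :: "nat \<Rightarrow> nat" assume "strict_mono \<sigma>"
    define u where "u n = inner (s (\<sigma> n)) (s j)" for n
    obtain r' where r': "strict_mono r'" "monoseq (\<lambda>n. u (r' n))" using seq_monosub by blast
    have "Bseq (\<lambda>n. u (r' n))"
    proof (rule BseqI'[where K = "K * norm (s j)"])
      fix n
      have "norm (u (r' n)) \<le> norm (s (\<sigma> (r' n))) * norm (s j)"
        unfolding u_def real_norm_def by (rule Cauchy_Schwarz_ineq2)
      also have "\<dots> \<le> K * norm (s j)" using bd by (simp add: mult_right_mono)
      finally show "norm (u (r' n)) \<le> K * norm (s j)" .
    qed
    then have "convergent (\<lambda>n. u (r' n))" using r'(2) by (rule Bseq_monoseq_convergent)
    then show "\<exists>r'. strict_mono r' \<and> P j (\<sigma> \<circ> r')" using r'(1) unfolding P_def u_def by auto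
  qed
  have "P j diagseq" for j
  proof -
    have "P j (diagseq \<circ> (+) (Suc j))"
    proof (rule diagseq_holds)
      fix r :: "nat \<Rightarrow> nat" and t n assume "strict_mono r" "P n t"
      then show "P n (t \<circ> r)" unfolding P_def
        using convergent_subseq_convergent[of "\<lambda>k. inner (s (t k)) (s n)" r] by (simp add: o_def)
    qed
    then have "convergent (\<lambda>n. inner (s (diagseq (n + Suc j))) (s j))"
      unfolding P_def by (simp add: o_def add.commute)
    then show ?thesis unfolding P_def by (subst (asm) convergent_ignore_initial_segment)
  qed
  then show ?thesis using subseq_diagseq unfolding P_def by blast
qed


lemma weak_compact:
  fixes D :: "'b::real_inner set" and s :: "nat \<Rightarrow> 'b"
  assumes subD: "subspace D" and compD: "complete D" and sD: "\<And>n. s n \<in> D"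
    and bd: "\<And>n. norm (s n) \<le> K"
  shows "\<exists>r l. strict_mono r \<and> l \<in> D \<and> weakly_converges (s \<circ> r) l"
proof -
  obtain r where r: "strict_mono r" "\<And>j. convergent (\<lambda>n. inner (s (r n)) (s j))"
    using diag_inner[of s K] bd by blast
  have K0: "K \<ge> 0" using bd[of 0] norm_ge_zero order_trans by blast
  define V where "V = {v \<in> D. convergent (\<lambda>n. inner (s (r n)) v)}"
  have sV: "s j \<in> V" for j unfolding V_def using sD r(2) by blast
  have VD: "V \<subseteq> D" unfolding V_def by auto
  have subV: "subspace V"
    unfolding subspace_def
  proof (intro conjI ballI allI)
    show "0 \<in> V" unfolding V_def using subD by (simp add: subspace_0 convergent_const)
    show "x + y \<in> V" if "x \<in> V" "y \<in> V" for x y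
      using that subD unfolding V_def by (auto simp: inner_add_right subspace_add intro: convergent_add)
    show "c *\<^sub>R x \<in> V" if "x \<in> V" for c x
      using that subD convergent_mult[OF convergent_const[of c]] unfolding V_def by (auto simp: subspace_scale)
  qed
  have compV: "complete V"
    unfolding complete_def
  proof (intro allI impI)
    fix v :: "nat \<Rightarrow> 'b" assume v: "(\<forall>n. v n \<in> V) \<and> Cauchy v"
    then obtain l where l: "l \<in> D" "v \<longlonglongrightarrow> l" using compD VD unfolding complete_def by blast
    have "Cauchy (\<lambda>n. inner (s (r n)) l)"
    proof (rule metric_CauchyI)
      fix e :: real assume e: "e > 0"
      have "\<forall>\<^sub>F k in sequentially. dist (v k) l < e / (3 * (K + 1))"
        using l(2) e K0 by (auto simp: tendsto_iff)
      then obtain k where k: "norm (v k - l) < e / (3 * (K + 1))"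
        by (auto simp: dist_norm dest: eventually_happens)
      have "convergent (\<lambda>n. inner (s (r n)) (v k))" using v unfolding V_def by auto
      then have "Cauchy (\<lambda>n. inner (s (r n)) (v k))" by (simp add: Cauchy_convergent_iff)
      then obtain M where M: "\<And>m n. m \<ge> M \<Longrightarrow> n \<ge> M \<Longrightarrow>
          dist (inner (s (r m)) (v k)) (inner (s (r n)) (v k)) < e / 3"
        using e unfolding Cauchy_def by (meson divide_pos_pos zero_less_numeral)
      have bnd: "\<bar>inner (s (r n)) (v k - l)\<bar> < e / 3" for n
      proof -
        have "\<bar>inner (s (r n)) (v k - l)\<bar> \<le> norm (s (r n)) * norm (v k - l)"
          by (rule Cauchy_Schwarz_ineq2)
        also have "\<dots> \<le> (K + 1) * norm (v k - l)" using bd[of "r n"] by (simp add: mult_right_mono)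
        also have "\<dots> < (K + 1) * (e / (3 * (K + 1)))" using k K0 by (intro mult_strict_left_mono) auto
        also have "\<dots> = e / 3" using K0 by (simp add: field_simps)
        finally show ?thesis .
      qed
      have "dist (inner (s (r m)) l) (inner (s (r n)) l) < e" if "m \<ge> M" "n \<ge> M" for m n
      proof -
        have "inner (s (r m)) l - inner (s (r n)) l = (inner (s (r m)) (v k) - inner (s (r n)) (v k))
            - inner (s (r m)) (v k - l) + inner (s (r n)) (v k - l)"
          by (simp add: inner_diff_right)
        then show ?thesis using M[OF that] bnd[of m] bnd[of n] unfolding dist_real_def by linarith
      qed
      then show "\<exists>M. \<forall>m\<ge>M. \<forall>n\<ge>M. dist (inner (s (r m)) l) (inner (s (r n)) l) < e" by blast
    qed
    then have "l \<in> V" using l(1) unfolding V_def by (simp add: Cauchy_convergent_iff)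
    then show "\<exists>l\<in>V. v \<longlonglongrightarrow> l" using l(2) by blast
  qed
  define f where "f v = lim (\<lambda>n. inner (s (r n)) v)" for v
  have flim: "(\<lambda>n. inner (s (r n)) v) \<longlonglongrightarrow> f v" if "v \<in> V" for v
    using that unfolding V_def f_def by (simp add: convergent_LIMSEQ_iff)
  obtain xb where xb: "xb \<in> V" "\<And>v. v \<in> V \<Longrightarrow> inner xb v = f v"
  proof -
    have "\<exists>xb\<in>V. \<forall>v\<in>V. inner xb v = f v"
    proof (rule riesz_sub[OF subV compV, where K = K])
      show "f (u + v) = f u + f v" if "u \<in> V" "v \<in> V" for u v
      proof -
        have "(\<lambda>n. inner (s (r n)) (u + v)) \<longlonglongrightarrow> f u + f v"
          using tendsto_add[OF flim[OF that(1)] flim[OF that(2)]] by (simp add: inner_add_right)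
        moreover have "u + v \<in> V" using subV that by (rule subspace_add)
        ultimately show ?thesis using flim LIMSEQ_unique by blast
      qed
      show "f (c *\<^sub>R u) = c * f u" if "u \<in> V" for u c
      proof -
        have "(\<lambda>n. inner (s (r n)) (c *\<^sub>R u)) \<longlonglongrightarrow> c * f u"
          using tendsto_mult[OF tendsto_const[of c] flim[OF that]] by simp
        moreover have "c *\<^sub>R u \<in> V" using subV that by (rule subspace_scale)
        ultimately show ?thesis using flim LIMSEQ_unique by blast
      qed
      show "\<bar>f v\<bar> \<le> K * norm v" if "v \<in> V" for v
      proof (rule LIMSEQ_le_const2)
        show "(\<lambda>n. \<bar>inner (s (r n)) v\<bar>) \<longlonglongrightarrow> \<bar>f v\<bar>" by (intro tendsto_intros flim that)
        have "\<bar>inner (s (r n)) v\<bar> \<le> K * norm v" for n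
          using Cauchy_Schwarz_ineq2[of "s (r n)" v] bd[of "r n"]
          by (meson mult_right_mono norm_ge_zero order_trans)
        then show "\<exists>N. \<forall>n\<ge>N. \<bar>inner (s (r n)) v\<bar> \<le> K * norm v" by blast
      qed
    qed
    then show ?thesis using that by blast
  qed
  have "weakly_converges (s \<circ> r) xb"
    unfolding weakly_converges_def
  proof
    fix w
    obtain \<pi> where \<pi>: "\<pi> \<in> V" "\<And>v. v \<in> V \<Longrightarrow> inner \<pi> v = inner w v"
    proof -
      have "\<exists>\<pi>\<in>V. \<forall>v\<in>V. inner \<pi> v = inner w v"
        by (rule riesz_sub[OF subV compV, where K = "norm w"])
          (auto simp: inner_add_right Cauchy_Schwarz_ineq2)
      then show ?thesis using that by blast
    qed
    have "(\<lambda>n. inner (s (r n)) \<pi>) \<longlonglongrightarrow> f \<pi>" by (rule flim[OF \<pi>(1)])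
    moreover have "inner (s (r n)) \<pi> = inner (s (r n)) w" for n
      using \<pi>(2)[OF sV[of "r n"]] by (simp add: inner_commute)
    moreover have "f \<pi> = inner xb w"
      using xb(2)[OF \<pi>(1)] \<pi>(2)[OF xb(1)] by (simp add: inner_commute)
    ultimately show "(\<lambda>n. inner ((s \<circ> r) n) w) \<longlonglongrightarrow> inner xb w" by simp
  qed
  then show ?thesis using r(1) xb(1) VD by blast
qed

lemma quasi_fejer:
  fixes \<alpha> e :: "nat \<Rightarrow> real"
  assumes step: "\<And>n. \<alpha> (Suc n) \<le> \<alpha> n + e n" and e0: "\<And>n. e n \<ge> 0" and se: "summable e"
    and a0: "\<And>n. \<alpha> n \<ge> 0"
  shows "convergent \<alpha>"
proof -
  define \<beta> where "\<beta> n = \<alpha> n - (\<Sum>k<n. e k)" for n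
  have dec: "\<beta> (Suc n) \<le> \<beta> n" for n using step[of n] unfolding \<beta>_def by simp
  then have decs: "decseq \<beta>" by (simp add: decseq_SucI)
  have lb: "\<beta> n \<ge> - suminf e" for n
    using sum_le_suminf[OF se, of "{..<n}"] e0 a0[of n] unfolding \<beta>_def by auto
  have "Bseq \<beta>"
  proof (rule BseqI'[where K = "\<bar>\<beta> 0\<bar> + \<bar>suminf e\<bar>"])
    fix n
    have "\<beta> n \<le> \<beta> 0" using decs by (simp add: decseq_def)
    then show "norm (\<beta> n) \<le> \<bar>\<beta> 0\<bar> + \<bar>suminf e\<bar>" using lb[of n] by simp
  qed
  then have "convergent \<beta>" using decs by (simp add: Bseq_monoseq_convergent monoseq_iff)
  moreover have "convergent (\<lambda>n. \<Sum>k<n. e k)"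
    using se by (simp add: summable_iff_convergent)
  ultimately have "convergent (\<lambda>n. \<beta> n + (\<Sum>k<n. e k))" by (rule convergent_add)
  then show ?thesis unfolding \<beta>_def by simp
qed

lemma weak_shift:
  fixes s t :: "nat \<Rightarrow> 'b::real_inner"
  assumes "weakly_converges s l" "(\<lambda>n. norm (t n - s n)) \<longlonglongrightarrow> 0"
  shows "weakly_converges t l"
  unfolding weakly_converges_def
proof
  fix w
  have "(\<lambda>n. inner (t n - s n) w) \<longlonglongrightarrow> 0"
  proof (rule tendsto_0_le[where K = "norm w" and f = "\<lambda>n. norm (t n - s n)"])
    show "(\<lambda>n. norm (t n - s n)) \<longlonglongrightarrow> 0" by fact
    show "\<forall>\<^sub>F n in sequentially. norm (inner (t n - s n) w) \<le> norm (norm (t n - s n)) * norm w"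
      by (intro always_eventually allI) (simp add: Cauchy_Schwarz_ineq2)
  qed
  moreover have "(\<lambda>n. inner (s n) w) \<longlonglongrightarrow> inner l w" using assms(1) unfolding weakly_converges_def by blast
  ultimately have "(\<lambda>n. inner (t n - s n) w + inner (s n) w) \<longlonglongrightarrow> 0 + inner l w"
    by (rule tendsto_add)
  then show "(\<lambda>n. inner (t n) w) \<longlonglongrightarrow> inner l w" by (simp add: inner_diff_left)
qed

lemma weak_subseq:
  assumes "weakly_converges s l" "strict_mono r"
  shows "weakly_converges (s \<circ> r) l"
  unfolding weakly_converges_def
proof
  fix w
  have "(\<lambda>n. inner (s n) w) \<longlonglongrightarrow> inner l w" using assms(1) unfolding weakly_converges_def by blast
  from LIMSEQ_subseq_LIMSEQ[OF this assms(2)]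
  show "(\<lambda>n. inner ((s \<circ> r) n) w) \<longlonglongrightarrow> inner l w" by (simp add: o_def)
qed

lemma not_tendsto_subseq:
  fixes f :: "nat \<Rightarrow> real"
  assumes "\<not> f \<longlonglongrightarrow> L"
  shows "\<exists>e>0. \<exists>r::nat\<Rightarrow>nat. strict_mono r \<and> (\<forall>j. e \<le> \<bar>f (r j) - L\<bar>)"
proof -
  obtain e where e: "e > 0" "\<And>N. \<exists>n\<ge>N. \<not> dist (f n) L < e"
    using assms unfolding LIMSEQ_def by blast
  have "\<forall>m. \<exists>n\<ge>m. n \<in> {n. e \<le> \<bar>f n - L\<bar>}"
  proof
    fix m
    obtain n where "n \<ge> m" "\<not> dist (f n) L < e" using e(2) by blast
    then show "\<exists>n\<ge>m. n \<in> {n. e \<le> \<bar>f n - L\<bar>}" unfolding dist_real_def by force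
  qed
  then have "infinite {n. e \<le> \<bar>f n - L\<bar>}"
    using infinite_nat_iff_unbounded_le by blast
  then obtain r :: "nat \<Rightarrow> nat" where "strict_mono r" "\<forall>j. r j \<in> {n. e \<le> \<bar>f n - L\<bar>}"
    using infinite_enumerate by blast
  then show ?thesis using e(1) by blast
qed

lemma proj_nonexp:
  fixes P :: "'b::real_inner \<Rightarrow> 'b"
  assumes vi1: "inner (P v - P u) (u - P u) \<le> 0" and vi2: "inner (P u - P v) (v - P v) \<le> 0"
  shows "norm (P u - P v) \<le> norm (u - v)"
proof -
  define d where "d = P u - P v"
  have "inner (P v - P u) (u - P u) = - inner d (u - P u)" unfolding d_def by (simp add: inner_diff_left)
  then have "inner d (u - P u) \<ge> 0" using vi1 by simp
  moreover have "inner d (v - P v) \<le> 0" using vi2 unfolding d_def .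
  ultimately have "inner d ((u - v) - d) \<ge> 0" unfolding d_def by (simp add: inner_diff_right)
  then have "(norm d)\<^sup>2 \<le> inner d (u - v)" by (simp add: inner_diff_right power2_norm_eq_inner)
  also have "\<dots> \<le> norm d * norm (u - v)" by (rule norm_cauchy_schwarz)
  finally have "norm d * norm d \<le> norm d * norm (u - v)" by (simp add: power2_eq_square)
  then show ?thesis unfolding d_def
    by (cases "norm d = 0") (auto simp: d_def)
qed

lemma tseng_step:
  fixes x s ph Bx Bph :: "'b::real_inner" and g k \<epsilon> :: real
  assumes vi: "inner (s - ph) ((x - g *\<^sub>R Bx) - ph) \<le> 0"
    and mon: "inner (ph - s) Bph \<ge> 0"
    and lip: "norm (Bx - Bph) \<le> k * norm (x - ph)"
    and g0: "0 \<le> g" and k0: "0 \<le> k" and gk: "g * k \<le> 1 - \<epsilon>" and e0: "0 < \<epsilon>" "\<epsilon> < 1"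
  shows "(norm (ph + g *\<^sub>R (Bx - Bph) - s))\<^sup>2 \<le> (norm (x - s))\<^sup>2 - \<epsilon> * (norm (x - ph))\<^sup>2"
proof -
  have id: "(norm (ph + g *\<^sub>R (Bx - Bph) - s))\<^sup>2 = (norm (x - s))\<^sup>2 - (norm (x - ph))\<^sup>2
      + g\<^sup>2 * (norm (Bx - Bph))\<^sup>2 + 2 * inner (s - ph) ((x - g *\<^sub>R Bx) - ph) - 2 * g * inner (ph - s) Bph"
    unfolding power2_norm_eq_inner
    by (simp add: inner_simps inner_commute algebra_simps power2_eq_square)
  have "g * norm (Bx - Bph) \<le> g * (k * norm (x - ph))" using lip g0 by (rule mult_left_mono)
  also have "\<dots> \<le> (1 - \<epsilon>) * norm (x - ph)" using gk by (simp add: mult_right_mono mult.assoc[symmetric])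
  finally have h1: "g * norm (Bx - Bph) \<le> (1 - \<epsilon>) * norm (x - ph)" .
  have "(g * norm (Bx - Bph))\<^sup>2 \<le> ((1 - \<epsilon>) * norm (x - ph))\<^sup>2"
    using h1 g0 by (intro power_mono) auto
  also have "\<dots> = (1 - \<epsilon>)\<^sup>2 * (norm (x - ph))\<^sup>2" by (simp add: power_mult_distrib)
  also have "\<dots> \<le> (1 - \<epsilon>) * (norm (x - ph))\<^sup>2"
  proof (rule mult_right_mono)
    show "(1 - \<epsilon>)\<^sup>2 \<le> 1 - \<epsilon>" using e0 by (simp add: power2_eq_square mult_le_cancel_right1)
  qed simp
  finally have h2: "g\<^sup>2 * (norm (Bx - Bph))\<^sup>2 \<le> (1 - \<epsilon>) * (norm (x - ph))\<^sup>2"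
    by (simp add: power_mult_distrib)
  have "g * inner (ph - s) Bph \<ge> 0" using g0 mon by simp
  then show ?thesis unfolding id using h2 vi by (simp add: algebra_simps del: power2_norm_eq_inner)
qed

theorem tseng_abs:
  fixes D C :: "'b::real_inner set" and P B :: "'b \<Rightarrow> 'b" and x y p q ea eb ec :: "nat \<Rightarrow> 'b"
    and \<gamma> :: "nat \<Rightarrow> real" and \<kappa> \<epsilon> :: real and z :: 'b
  assumes subD: "subspace D" and compD: "complete D"
    and CD: "C \<subseteq> D" and convC: "convex C"
    and PC: "\<And>u. u \<in> D \<Longrightarrow> P u \<in> C"
    and Pvi: "\<And>u v. u \<in> D \<Longrightarrow> v \<in> C \<Longrightarrow> inner (v - P u) (u - P u) \<le> 0"
    and BD: "\<And>u. u \<in> D \<Longrightarrow> B u \<in> D"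
    and mono: "\<And>u v. u \<in> D \<Longrightarrow> v \<in> D \<Longrightarrow> inner (B u - B v) (u - v) \<ge> 0"
    and lip: "\<And>u v. u \<in> D \<Longrightarrow> v \<in> D \<Longrightarrow> norm (B u - B v) \<le> \<kappa> * norm (u - v)"
    and zC: "z \<in> C" and zS: "\<And>v. v \<in> C \<Longrightarrow> inner (v - z) (B z) \<ge> 0"
    and chi: "\<kappa> > 0" and eps: "0 < \<epsilon>" "\<epsilon> < 1 / (\<kappa> + 1)"
    and gamma: "\<And>n. \<epsilon> \<le> \<gamma> n \<and> \<gamma> n \<le> (1 - \<epsilon>) / \<kappa>"
    and x0: "x 0 \<in> D" and eD: "\<And>n. ea n \<in> D \<and> eb n \<in> D \<and> ec n \<in> D"
    and sa: "summable (\<lambda>n. norm (ea n))" and sb: "summable (\<lambda>n. norm (eb n))"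
    and sc: "summable (\<lambda>n. norm (ec n))"
    and y_def: "\<And>n. y n = x n - \<gamma> n *\<^sub>R (B (x n) + ea n)"
    and p_def: "\<And>n. p n = P (y n) + eb n"
    and q_def: "\<And>n. q n = p n - \<gamma> n *\<^sub>R (B (p n) + ec n)"
    and x_def: "\<And>n. x (Suc n) = x n - y n + q n"
  shows "\<exists>xb\<in>C. (\<forall>v\<in>C. inner (v - xb) (B xb) \<ge> 0) \<and> weakly_converges x xb \<and> weakly_converges p xb"
proof -
  define S where "S = {s \<in> C. \<forall>v\<in>C. inner (v - s) (B s) \<ge> 0}"
  define \<Gamma> where "\<Gamma> = (1 - \<epsilon>) / \<kappa>"
  have e1: "\<epsilon> < 1"
  proof -
    have "1 / (\<kappa> + 1) < 1" using chi by simp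
    then show ?thesis using eps by linarith
  qed
  have g0: "\<gamma> n > 0" for n using gamma[of n] eps by linarith
  have gG: "\<gamma> n \<le> \<Gamma>" for n using gamma[of n] unfolding \<Gamma>_def by simp
  have gk: "\<gamma> n * \<kappa> \<le> 1 - \<epsilon>" for n
    using gamma[of n] chi by (simp add: pos_le_divide_eq)
  have G0: "\<Gamma> \<ge> 0" using gG[of 0] g0[of 0] by linarith
  have ge: "\<gamma> n \<ge> \<epsilon>" for n using gamma[of n] by simp
  have Dadd: "u + v \<in> D" if "u \<in> D" "v \<in> D" for u v using subD that by (rule subspace_add)
  have Ddiff: "u - v \<in> D" if "u \<in> D" "v \<in> D" for u v using subD that by (rule subspace_diff)
  have Dscale: "r *\<^sub>R u \<in> D" if "u \<in> D" for u r using subD that by (rule subspace_scale)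
  have ea: "ea n \<in> D" and eb: "eb n \<in> D" and ec: "ec n \<in> D" for n using eD by auto
  have yD': "y n \<in> D" if "x n \<in> D" for n
    unfolding y_def by (intro Ddiff that Dscale Dadd BD ea)
  have pD': "p n \<in> D" if "x n \<in> D" for n
    unfolding p_def by (intro Dadd eb subsetD[OF CD] PC yD' that)
  have qD': "q n \<in> D" if "x n \<in> D" for n
    unfolding q_def by (intro Ddiff pD' that Dscale Dadd BD ec)
  have xD: "x n \<in> D" for n
  proof (induction n)
    case 0 show ?case by (rule x0)
  next
    case (Suc n)
    show ?case unfolding x_def by (intro Dadd Ddiff Suc yD' qD')
  qed
  have yD: "y n \<in> D" for n using yD' xD by blast
  have pD: "p n \<in> D" for n using pD' xD by blast
  have Pnonexp: "norm (P u - P v) \<le> norm (u - v)" if "u \<in> D" "v \<in> D" for u v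
    by (rule proj_nonexp) (use that PC Pvi in blast)+
  define w where "w n = x n - \<gamma> n *\<^sub>R B (x n)" for n
  have wD: "w n \<in> D" for n unfolding w_def using xD BD Ddiff Dscale by blast
  define ph where "ph n = P (w n)" for n
  have phC: "ph n \<in> C" for n unfolding ph_def using PC wD by blast
  have phD: "ph n \<in> D" for n using phC CD by blast
  define T where "T n = ph n + \<gamma> n *\<^sub>R (B (x n) - B (ph n))" for n
  define E where "E n = \<Gamma> * norm (ea n) + (1 + \<Gamma> * \<kappa>) * (\<Gamma> * norm (ea n) + norm (eb n)) + \<Gamma> * norm (ec n)" for n
  have sE: "summable E" unfolding E_def
    by (intro summable_add summable_mult sa sb sc)
  have E0: "E n \<ge> 0" for n unfolding E_def using G0 chi by simp
  have Elim: "E \<longlonglongrightarrow> 0" using sE by (rule summable_LIMSEQ_zero)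
  have pph: "norm (p n - ph n) \<le> \<Gamma> * norm (ea n) + norm (eb n)" for n
  proof -
    have "y n - w n = - (\<gamma> n *\<^sub>R ea n)" unfolding y_def w_def by (simp add: algebra_simps)
    then have "norm (P (y n) - ph n) \<le> \<gamma> n * norm (ea n)"
      using Pnonexp[OF yD[of n] wD[of n]] g0[of n] unfolding ph_def by simp
    also have "\<dots> \<le> \<Gamma> * norm (ea n)" using gG by (simp add: mult_right_mono)
    finally have h: "norm (P (y n) - ph n) \<le> \<Gamma> * norm (ea n)" .
    have eqp: "p n - ph n = (P (y n) - ph n) + eb n" unfolding p_def by simp
    have "norm (p n - ph n) \<le> norm (P (y n) - ph n) + norm (eb n)" unfolding eqp by (rule norm_triangle_ineq)
    then show ?thesis using h by linarith
  qed
  have errE: "norm (x (Suc n) - T n) \<le> E n" for n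
  proof -
    let ?g = "\<gamma> n"
    have eq: "x (Suc n) - T n = ?g *\<^sub>R ea n + (p n - ph n) - ?g *\<^sub>R (B (p n) - B (ph n)) - ?g *\<^sub>R ec n"
      unfolding x_def y_def q_def T_def by (simp add: algebra_simps)
    have "norm (x (Suc n) - T n) \<le> norm (?g *\<^sub>R ea n) + norm (p n - ph n) + norm (?g *\<^sub>R (B (p n) - B (ph n))) + norm (?g *\<^sub>R ec n)"
    proof -
      have "norm (?g *\<^sub>R ea n + (p n - ph n) - ?g *\<^sub>R (B (p n) - B (ph n)) - ?g *\<^sub>R ec n)
          \<le> norm (?g *\<^sub>R ea n + (p n - ph n) - ?g *\<^sub>R (B (p n) - B (ph n))) + norm (?g *\<^sub>R ec n)"
        by (rule norm_triangle_ineq4)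
      moreover have "norm (?g *\<^sub>R ea n + (p n - ph n) - ?g *\<^sub>R (B (p n) - B (ph n)))
          \<le> norm (?g *\<^sub>R ea n + (p n - ph n)) + norm (?g *\<^sub>R (B (p n) - B (ph n)))"
        by (rule norm_triangle_ineq4)
      moreover have "norm (?g *\<^sub>R ea n + (p n - ph n)) \<le> norm (?g *\<^sub>R ea n) + norm (p n - ph n)"
        by (rule norm_triangle_ineq)
      ultimately show ?thesis unfolding eq by linarith
    qed
    also have "\<dots> \<le> \<Gamma> * norm (ea n) + norm (p n - ph n) + \<Gamma> * (\<kappa> * norm (p n - ph n)) + \<Gamma> * norm (ec n)"
    proof -
      have "norm (?g *\<^sub>R ea n) \<le> \<Gamma> * norm (ea n)" using g0[of n] gG[of n] by (simp add: mult_right_mono)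
      moreover have "norm (?g *\<^sub>R ec n) \<le> \<Gamma> * norm (ec n)" using g0[of n] gG[of n] by (simp add: mult_right_mono)
      moreover have "norm (?g *\<^sub>R (B (p n) - B (ph n))) \<le> \<Gamma> * (\<kappa> * norm (p n - ph n))"
      proof -
        have "norm (?g *\<^sub>R (B (p n) - B (ph n))) = ?g * norm (B (p n) - B (ph n))" using g0[of n] by simp
        also have "\<dots> \<le> \<Gamma> * (\<kappa> * norm (p n - ph n))"
          using lip[OF pD phD, of n n] gG[of n] g0[of n] G0
          by (intro mult_mono) auto
        finally show ?thesis .
      qed
      ultimately show ?thesis by linarith
    qed
    also have "\<dots> = \<Gamma> * norm (ea n) + (1 + \<Gamma> * \<kappa>) * norm (p n - ph n) + \<Gamma> * norm (ec n)"
      by (simp add: algebra_simps)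
    also have "\<dots> \<le> E n" unfolding E_def using pph[of n] G0 chi
      by (intro add_mono mult_left_mono) auto
    finally show ?thesis .
  qed
  have fej: "(norm (T n - s))\<^sup>2 \<le> (norm (x n - s))\<^sup>2 - \<epsilon> * (norm (x n - ph n))\<^sup>2" if sS: "s \<in> S" for s n
  proof -
    have sC: "s \<in> C" and sD: "s \<in> D" using sS CD unfolding S_def by auto
    have vi: "inner (s - ph n) ((x n - \<gamma> n *\<^sub>R B (x n)) - ph n) \<le> 0"
      using Pvi[OF wD sC, of n] unfolding ph_def w_def by simp
    have mon: "inner (ph n - s) (B (ph n)) \<ge> 0"
    proof -
      have "inner (B (ph n) - B s) (ph n - s) \<ge> 0" by (rule mono[OF phD sD])
      moreover have "inner (ph n - s) (B s) \<ge> 0" using sS phC unfolding S_def by blast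
      moreover have "inner (ph n - s) (B (ph n)) = inner (B (ph n) - B s) (ph n - s) + inner (ph n - s) (B s)"
        by (simp add: inner_diff_left inner_diff_right inner_commute)
      ultimately show ?thesis by linarith
    qed
    show ?thesis unfolding T_def
      by (rule tseng_step[OF vi mon _ _ _ gk eps(1) e1])
        (use lip[OF xD phD] g0[of n] chi in \<open>auto intro: less_imp_le\<close>)
  qed
  have Tle: "norm (T n - s) \<le> norm (x n - s)" if "s \<in> S" for s n
  proof -
    have "(norm (T n - s))\<^sup>2 \<le> (norm (x n - s))\<^sup>2"
    proof -
      have "0 \<le> \<epsilon> * (norm (x n - ph n))\<^sup>2" using eps by simp
      then show ?thesis using fej[OF that, of n] by linarith
    qed
    then show ?thesis by (rule power2_le_imp_le) simp
  qed
  have rstep: "norm (x (Suc n) - s) \<le> norm (T n - s) + E n" if "s \<in> S" for s n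
  proof -
    have "x (Suc n) - s = (T n - s) + (x (Suc n) - T n)" by simp
    then have "norm (x (Suc n) - s) \<le> norm (T n - s) + norm (x (Suc n) - T n)"
      using norm_triangle_ineq[of "T n - s" "x (Suc n) - T n"] by simp
    then show ?thesis using errE[of n] by linarith
  qed
  have rconv: "convergent (\<lambda>n. norm (x n - s))" if "s \<in> S" for s
  proof (rule quasi_fejer[OF _ E0 sE])
    show "norm (x (Suc n) - s) \<le> norm (x n - s) + E n" for n
      using rstep[OF that, of n] Tle[OF that, of n] by linarith
  qed simp
  have zSS: "z \<in> S" unfolding S_def using zC zS by blast
  obtain M where M: "\<And>n. norm (x n - z) \<le> M"
    using convergent_imp_Bseq[OF rconv[OF zSS]] unfolding Bseq_def by force
  have M0: "M \<ge> 0" using M[of 0] norm_ge_zero order_trans by blast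
  have xbd: "norm (x n) \<le> norm z + M" for n
    using M[of n] norm_triangle_ineq2[of "x n" z] by linarith
  have ulim: "(\<lambda>n. norm (x n - ph n)) \<longlonglongrightarrow> 0"
  proof -
    define r where "r n = norm (x n - z)" for n
    obtain Lr where Lr: "r \<longlonglongrightarrow> Lr" using rconv[OF zSS] unfolding r_def convergent_def by blast
    have dl: "(\<lambda>n. r n - r (Suc n) + E n) \<longlonglongrightarrow> 0"
      using tendsto_add[OF tendsto_diff[OF Lr LIMSEQ_Suc[OF Lr]] Elim] by simp
    have b: "\<epsilon> * (norm (x n - ph n))\<^sup>2 \<le> 2 * M * (r n - r (Suc n) + E n)" for n
    proof -
      define t where "t = norm (T n - z)"
      have t0: "t \<ge> 0" unfolding t_def by simp
      have "\<epsilon> * (norm (x n - ph n))\<^sup>2 \<le> (r n)\<^sup>2 - t\<^sup>2" using fej[OF zSS, of n] unfolding r_def t_def by simp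
      also have "\<dots> = (r n - t) * (r n + t)" by (simp add: power2_eq_square algebra_simps)
      also have "\<dots> \<le> (r n - r (Suc n) + E n) * (2 * M)"
      proof (rule mult_mono)
        show "r n - t \<le> r n - r (Suc n) + E n" using rstep[OF zSS, of n] unfolding r_def t_def by simp
        show "r n + t \<le> 2 * M" using Tle[OF zSS, of n] M[of n] unfolding r_def t_def by simp
        show "0 \<le> r n - r (Suc n) + E n" using rstep[OF zSS, of n] Tle[OF zSS, of n] unfolding r_def by simp
        show "0 \<le> r n + t" using t0 unfolding r_def by simp
      qed
      finally show ?thesis by (simp add: algebra_simps)
    qed
    have "(\<lambda>n. (norm (x n - ph n))\<^sup>2) \<longlonglongrightarrow> 0"
    proof (rule real_tendsto_sandwich[of "\<lambda>n. 0" _ _ "\<lambda>n. (2 * M / \<epsilon>) * (r n - r (Suc n) + E n)"])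
      show "\<forall>\<^sub>F n in sequentially. 0 \<le> (norm (x n - ph n))\<^sup>2" by simp
      show "\<forall>\<^sub>F n in sequentially. (norm (x n - ph n))\<^sup>2 \<le> (2 * M / \<epsilon>) * (r n - r (Suc n) + E n)"
        using b eps by (intro always_eventually allI) (simp add: field_simps mult.commute)
      show "(\<lambda>n. 0) \<longlonglongrightarrow> (0::real)" by simp
      show "(\<lambda>n. (2 * M / \<epsilon>) * (r n - r (Suc n) + E n)) \<longlonglongrightarrow> 0"
        using tendsto_mult[OF tendsto_const[of "2 * M / \<epsilon>"] dl] by simp
    qed
    then have "(\<lambda>n. sqrt ((norm (x n - ph n))\<^sup>2)) \<longlonglongrightarrow> sqrt 0" by (rule tendsto_real_sqrt)
    then show ?thesis by simp
  qed
  have pxlim: "(\<lambda>n. norm (p n - x n)) \<longlonglongrightarrow> 0"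
  proof (rule real_tendsto_sandwich[of "\<lambda>n. 0" _ _ "\<lambda>n. \<Gamma> * norm (ea n) + norm (eb n) + norm (x n - ph n)"])
    show "\<forall>\<^sub>F n in sequentially. 0 \<le> norm (p n - x n)" by simp
    show "\<forall>\<^sub>F n in sequentially. norm (p n - x n) \<le> \<Gamma> * norm (ea n) + norm (eb n) + norm (x n - ph n)"
    proof (intro always_eventually allI)
      fix n
      have "p n - x n = (p n - ph n) - (x n - ph n)" by simp
      then have "norm (p n - x n) \<le> norm (p n - ph n) + norm (x n - ph n)"
        using norm_triangle_ineq4[of "p n - ph n" "x n - ph n"] by simp
      then show "norm (p n - x n) \<le> \<Gamma> * norm (ea n) + norm (eb n) + norm (x n - ph n)" using pph[of n] by linarith
    qed
    show "(\<lambda>n. 0) \<longlonglongrightarrow> (0::real)" by simp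
    show "(\<lambda>n. \<Gamma> * norm (ea n) + norm (eb n) + norm (x n - ph n)) \<longlonglongrightarrow> 0"
      using tendsto_add[OF tendsto_add[OF tendsto_mult[OF tendsto_const summable_LIMSEQ_zero[OF sa]]
            summable_LIMSEQ_zero[OF sb]] ulim] by simp
  qed
  have cluster: "v \<in> S" if k: "strict_mono k" and vD: "v \<in> D" and wk: "weakly_converges (x \<circ> k) v" for k v
  proof -
    have ulimk: "(\<lambda>j. norm (x (k j) - ph (k j))) \<longlonglongrightarrow> 0"
      using LIMSEQ_subseq_LIMSEQ[OF ulim k] by (simp add: o_def)
    have wph: "weakly_converges (ph \<circ> k) v"
      by (rule weak_shift[OF wk]) (use ulimk in \<open>simp add: norm_minus_commute\<close>)
    have winner: "(\<lambda>j. inner (ph (k j)) u) \<longlonglongrightarrow> inner v u" for u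
      using wph unfolding weakly_converges_def by simp
    have vC: "v \<in> C"
    proof -
      define \<pi> where "\<pi> = P v"
      have "inner (ph (k j) - \<pi>) (v - \<pi>) \<le> 0" for j unfolding \<pi>_def by (rule Pvi[OF vD phC])
      moreover have "(\<lambda>j. inner (ph (k j) - \<pi>) (v - \<pi>)) \<longlonglongrightarrow> inner (v - \<pi>) (v - \<pi>)"
        using tendsto_diff[OF winner[of "v - \<pi>"] tendsto_const[of "inner \<pi> (v - \<pi>)"]]
        by (simp add: inner_diff_left)
      ultimately have "inner (v - \<pi>) (v - \<pi>) \<le> 0"
        by (intro LIMSEQ_le_const2[where X = "\<lambda>j. inner (ph (k j) - \<pi>) (v - \<pi>)"]) auto
      then have "inner (v - \<pi>) (v - \<pi>) = 0" using inner_ge_zero[of "v - \<pi>"] by linarith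
      then have "v = \<pi>" by simp
      then show ?thesis unfolding \<pi>_def using PC[OF vD] by simp
    qed
    have minty: "inner (c - v) (B c) \<ge> 0" if cC: "c \<in> C" for c
    proof -
      have cD: "c \<in> D" using cC CD by blast
      define L where "L = norm (c - z) + M"
      define K where "K = \<kappa> + 1 / \<epsilon>"
      have K0: "K \<ge> 0" unfolding K_def using chi eps by simp
      have low: "inner (c - ph n) (B c) \<ge> - (K * ((L + norm (x n - ph n)) * norm (x n - ph n)))" for n
      proof -
        let ?u = "x n - ph n" and ?g = "\<gamma> n"
        have cph: "norm (c - ph n) \<le> L + norm ?u"
        proof -
          have "c - ph n = (c - z) + (z - x n) + ?u" by simp
          then have "norm (c - ph n) \<le> norm (c - z) + norm (z - x n) + norm ?u"
            using norm_triangle_ineq[of "(c - z) + (z - x n)" ?u] norm_triangle_ineq[of "c - z" "z - x n"]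
            by simp
          then show ?thesis unfolding L_def using M[of n] by (simp add: norm_minus_commute)
        qed
        have vi: "inner (c - ph n) (w n - ph n) \<le> 0" unfolding ph_def by (rule Pvi[OF wD cC])
        have wexp: "w n - ph n = ?u - ?g *\<^sub>R B (x n)" unfolding w_def by simp
        have "inner (c - ph n) ?u \<le> ?g * inner (c - ph n) (B (x n))"
          using vi unfolding wexp by (simp add: inner_diff_right)
        moreover have "- (norm (c - ph n) * norm ?u) \<le> inner (c - ph n) ?u"
          using Cauchy_Schwarz_ineq2[of "c - ph n" ?u] by linarith
        ultimately have "- (norm (c - ph n) * norm ?u) \<le> ?g * inner (c - ph n) (B (x n))" by linarith
        then have "- (norm (c - ph n) * norm ?u) / ?g \<le> inner (c - ph n) (B (x n))"
          by (simp only: pos_divide_le_eq[OF g0[of n]]) (simp add: mult.commute)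
        moreover have "(norm (c - ph n) * norm ?u) / ?g \<le> (norm (c - ph n) * norm ?u) / \<epsilon>"
          using ge[of n] eps by (intro divide_left_mono) auto
        ultimately have t3: "- ((norm (c - ph n) * norm ?u) / \<epsilon>) \<le> inner (c - ph n) (B (x n))"
          by (smt (verit) minus_divide_left)
        have t1: "inner (c - ph n) (B c - B (ph n)) \<ge> 0"
          using mono[OF cD phD[of n]] by (simp add: inner_commute)
        have "\<bar>inner (c - ph n) (B (ph n) - B (x n))\<bar> \<le> norm (c - ph n) * norm (B (ph n) - B (x n))"
          by (rule Cauchy_Schwarz_ineq2)
        also have "\<dots> \<le> norm (c - ph n) * (\<kappa> * norm ?u)"
          using lip[OF phD xD, of n n] by (simp add: mult_left_mono norm_minus_commute)
        finally have t2: "inner (c - ph n) (B (ph n) - B (x n)) \<ge> - (norm (c - ph n) * (\<kappa> * norm ?u))"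
          by linarith
        have "inner (c - ph n) (B c) = inner (c - ph n) (B c - B (ph n)) + inner (c - ph n) (B (ph n) - B (x n))
            + inner (c - ph n) (B (x n))" by (simp add: inner_diff_right)
        then have "inner (c - ph n) (B c) \<ge> - (K * (norm (c - ph n) * norm ?u))"
          using t1 t2 t3 unfolding K_def by (simp add: algebra_simps)
        moreover have "K * (norm (c - ph n) * norm ?u) \<le> K * ((L + norm ?u) * norm ?u)"
          using cph K0 by (intro mult_left_mono mult_right_mono) auto
        ultimately show ?thesis by linarith
      qed
      have "(\<lambda>j. - (K * ((L + norm (x (k j) - ph (k j))) * norm (x (k j) - ph (k j))))) \<longlonglongrightarrow> - (K * ((L + 0) * 0))"
        by (intro tendsto_intros ulimk)
      then have lim0: "(\<lambda>j. - (K * ((L + norm (x (k j) - ph (k j))) * norm (x (k j) - ph (k j))))) \<longlonglongrightarrow> 0" by simp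
      have lim1: "(\<lambda>j. inner (c - ph (k j)) (B c)) \<longlonglongrightarrow> inner (c - v) (B c)"
        using tendsto_diff[OF tendsto_const[of "inner c (B c)"] winner[of "B c"]] by (simp add: inner_diff_left)
      show ?thesis using LIMSEQ_le[OF lim0 lim1] low by blast
    qed
    have "inner (c - v) (B v) \<ge> 0" if cC: "c \<in> C" for c
    proof -
      have cD: "c \<in> D" using cC CD by blast
      define t where "t j = inverse (real (Suc j))" for j
      have t0: "t j > 0" "t j \<le> 1" for j unfolding t_def by (auto simp: field_simps)
      define cj where "cj j = v + t j *\<^sub>R (c - v)" for j
      have cjC: "cj j \<in> C" for j
      proof -
        have "(1 - t j) *\<^sub>R v + t j *\<^sub>R c \<in> C" using convC vC cC t0[of j] unfolding convex_def by auto
        moreover have "(1 - t j) *\<^sub>R v + t j *\<^sub>R c = cj j" unfolding cj_def by (simp add: algebra_simps)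
        ultimately show ?thesis by simp
      qed
      have pos: "inner (c - v) (B (cj j)) \<ge> 0" for j
      proof -
        have "0 \<le> inner (cj j - v) (B (cj j))" by (rule minty[OF cjC])
        also have "\<dots> = t j * inner (c - v) (B (cj j))" unfolding cj_def by simp
        finally show ?thesis using t0[of j] by (simp add: zero_le_mult_iff)
      qed
      have "(\<lambda>j. norm (B (cj j) - B v)) \<longlonglongrightarrow> 0"
      proof (rule real_tendsto_sandwich[of "\<lambda>j. 0" _ _ "\<lambda>j. \<kappa> * (t j * norm (c - v))"])
        show "\<forall>\<^sub>F j in sequentially. 0 \<le> norm (B (cj j) - B v)" by simp
        show "\<forall>\<^sub>F j in sequentially. norm (B (cj j) - B v) \<le> \<kappa> * (t j * norm (c - v))"
        proof (intro always_eventually allI)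
          fix j
          have "\<bar>t j\<bar> = t j" using t0[of j] by simp
          then show "norm (B (cj j) - B v) \<le> \<kappa> * (t j * norm (c - v))"
            using lip[OF subsetD[OF CD cjC[of j]] vD] unfolding cj_def by simp
        qed
        show "(\<lambda>j. 0) \<longlonglongrightarrow> (0::real)" by simp
        have "(\<lambda>j. \<kappa> * (t j * norm (c - v))) \<longlonglongrightarrow> \<kappa> * (0 * norm (c - v))"
          unfolding t_def by (intro tendsto_intros LIMSEQ_inverse_real_of_nat)
        then show "(\<lambda>j. \<kappa> * (t j * norm (c - v))) \<longlonglongrightarrow> 0" by simp
      qed
      then have "(\<lambda>j. B (cj j)) \<longlonglongrightarrow> B v" by (simp add: tendsto_norm_zero_iff LIM_zero_iff)
      then have "(\<lambda>j. inner (c - v) (B (cj j))) \<longlonglongrightarrow> inner (c - v) (B v)" by (intro tendsto_intros)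
      then show ?thesis using pos by (intro LIMSEQ_le_const) auto
    qed
    then show ?thesis unfolding S_def using vC by blast
  qed
  have uniq: "v1 = v2" if v12: "v1 \<in> S" "v2 \<in> S" "strict_mono k1" "strict_mono k2"
      "weakly_converges (x \<circ> k1) v1" "weakly_converges (x \<circ> k2) v2" for v1 v2 k1 k2
  proof -
    have id: "inner (x n) (v1 - v2) = ((norm (x n - v2))\<^sup>2 - (norm (x n - v1))\<^sup>2 + (norm v1)\<^sup>2 - (norm v2)\<^sup>2) / 2" for n
      unfolding power2_norm_eq_inner by (simp add: inner_simps inner_commute algebra_simps)
    have "convergent (\<lambda>n. ((norm (x n - v2))\<^sup>2 - (norm (x n - v1))\<^sup>2 + (norm v1)\<^sup>2 - (norm v2)\<^sup>2) / 2)"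
    proof -
      obtain L1 L2 where "(\<lambda>n. norm (x n - v1)) \<longlonglongrightarrow> L1" "(\<lambda>n. norm (x n - v2)) \<longlonglongrightarrow> L2"
        using rconv[OF v12(1)] rconv[OF v12(2)] unfolding convergent_def by blast
      then have "(\<lambda>n. ((norm (x n - v2))\<^sup>2 - (norm (x n - v1))\<^sup>2 + (norm v1)\<^sup>2 - (norm v2)\<^sup>2) / 2)
          \<longlonglongrightarrow> (L2\<^sup>2 - L1\<^sup>2 + (norm v1)\<^sup>2 - (norm v2)\<^sup>2) / 2"
        by (intro tendsto_intros) auto
      then show ?thesis unfolding convergent_def by blast
    qed
    then obtain Lq where Lq: "(\<lambda>n. inner (x n) (v1 - v2)) \<longlonglongrightarrow> Lq"
      unfolding id[symmetric] convergent_def by blast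
    have "(\<lambda>j. inner (x (k1 j)) (v1 - v2)) \<longlonglongrightarrow> Lq"
      using LIMSEQ_subseq_LIMSEQ[OF Lq that(3)] by (simp add: o_def)
    moreover have "(\<lambda>j. inner (x (k1 j)) (v1 - v2)) \<longlonglongrightarrow> inner v1 (v1 - v2)"
      using that(5) unfolding weakly_converges_def by simp
    ultimately have l1: "Lq = inner v1 (v1 - v2)" by (rule LIMSEQ_unique)
    have "(\<lambda>j. inner (x (k2 j)) (v1 - v2)) \<longlonglongrightarrow> Lq"
      using LIMSEQ_subseq_LIMSEQ[OF Lq that(4)] by (simp add: o_def)
    moreover have "(\<lambda>j. inner (x (k2 j)) (v1 - v2)) \<longlonglongrightarrow> inner v2 (v1 - v2)"
      using that(6) unfolding weakly_converges_def by simp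
    ultimately have l2: "Lq = inner v2 (v1 - v2)" by (rule LIMSEQ_unique)
    have "inner (v1 - v2) (v1 - v2) = 0" using l1 l2 by (simp add: inner_diff_left)
    then show ?thesis by simp
  qed
  obtain k0 v0 where k0: "strict_mono k0" "v0 \<in> D" "weakly_converges (x \<circ> k0) v0"
    using weak_compact[of D x "norm z + M"] subD compD xD xbd by blast
  have v0S: "v0 \<in> S" using cluster[OF k0] .
  have wx: "weakly_converges x v0"
    unfolding weakly_converges_def
  proof (rule ccontr)
    assume "\<not> (\<forall>w. (\<lambda>n. inner (x n) w) \<longlonglongrightarrow> inner v0 w)"
    then obtain w where nw: "\<not> (\<lambda>n. inner (x n) w) \<longlonglongrightarrow> inner v0 w" by blast
    obtain e and r :: "nat \<Rightarrow> nat" where e: "e > 0" "strict_mono r" "\<And>j. e \<le> \<bar>inner (x (r j)) w - inner v0 w\<bar>"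
      using not_tendsto_subseq[OF nw] by blast
    obtain k' v' where k': "strict_mono k'" "v' \<in> D" "weakly_converges ((x \<circ> r) \<circ> k') v'"
      using weak_compact[of D "x \<circ> r" "norm z + M"] subD compD xD xbd by auto
    have sm: "strict_mono (r \<circ> k')" using e(2) k'(1) by (rule strict_mono_o)
    have wv: "weakly_converges (x \<circ> (r \<circ> k')) v'" using k'(3) by (simp add: o_assoc)
    have v'S: "v' \<in> S" by (rule cluster[OF sm k'(2) wv])
    have "v' = v0" by (rule uniq[OF v'S v0S sm k0(1) wv k0(3)])
    then have "(\<lambda>j. inner (x (r (k' j))) w) \<longlonglongrightarrow> inner v0 w"
      using wv unfolding weakly_converges_def by simp
    then have "\<forall>\<^sub>F j in sequentially. dist (inner (x (r (k' j))) w) (inner v0 w) < e"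
      using e(1) by (simp add: tendsto_iff)
    then obtain j where "dist (inner (x (r (k' j))) w) (inner v0 w) < e"
      unfolding eventually_sequentially by blast
    then show False using e(3)[of "k' j"] by (simp add: dist_real_def)
  qed
  have wp: "weakly_converges p v0"
    by (rule weak_shift[OF wx pxlim])
  show ?thesis using v0S wx wp unfolding S_def by blast
qed

definition zo :: "nat \<Rightarrow> (nat \<Rightarrow> 'a::zero) \<Rightarrow> bool" where
  "zo m f \<longleftrightarrow> (\<forall>i. i \<notin> {1..m} \<longrightarrow> f i = 0)"

lemma zo_fin: "zo m f \<Longrightarrow> finite {i. f i \<noteq> 0}"
  unfolding zo_def by (rule finite_subset[of _ "{1..m}"]) auto

lemma vf_mkv: "zo m f \<Longrightarrow> vf (mkv f) = (f :: nat \<Rightarrow> 'a::real_inner)"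
  by (rule mkv_inverse) (simp add: zo_fin)

lemma supp_zo: "zo m (vf X) \<Longrightarrow> supp X \<subseteq> {1..m}"
  unfolding zo_def supp_def by auto

lemma inner_zo: "zo m (vf X) \<Longrightarrow> inner X Y = (\<Sum>i\<in>{1..m}. inner (vf X i) (vf Y i))"
  unfolding inner_fsv_def by (rule fip_superset[OF _ supp_zo]) simp_all

lemma normsq_zo: "zo m (vf X) \<Longrightarrow> (norm X)\<^sup>2 = dnorm2 m (vf X)"
  unfolding power2_norm_eq_inner dnorm2_def by (simp add: inner_zo)

lemma inner_delta:
  "inner X (mkv (\<lambda>j. if j = i then w else 0)) = inner (vf X i) (w::'a::real_inner)"
proof -
  have fin: "finite {j. (if j = i then w else 0) \<noteq> 0}"
    by (rule finite_subset[of _ "{i}"]) auto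
  have v: "vf (mkv (\<lambda>j. if j = i then w else 0)) = (\<lambda>j. if j = i then w else 0)"
    by (rule mkv_inverse) (simp add: fin)
  have "inner X (mkv (\<lambda>j. if j = i then w else 0)) = (\<Sum>j\<in>{i}. inner (vf X j) (vf (mkv (\<lambda>j. if j = i then w else 0)) j))"
    unfolding inner_fsv_def by (rule fip_superset2) (auto simp: supp_def v)
  then show ?thesis by (simp add: v)
qed

lemma comp_le: "norm (vf Z i) \<le> norm Z"
proof (cases "i \<in> supp Z")
  case True
  have "(norm (vf Z i))\<^sup>2 \<le> (\<Sum>j\<in>supp Z. (norm (vf Z j))\<^sup>2)"
    by (rule member_le_sum) (use True in auto)
  also have "\<dots> = (norm Z)\<^sup>2" unfolding power2_norm_eq_inner[of Z] inner_fsv_def fip_self ..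
  finally show ?thesis by (rule power2_le_imp_le) simp
next
  case False then show ?thesis by (simp add: supp_def)
qed

lemma dsum_zo: "f \<in> dsum m H \<Longrightarrow> zo m f"
  unfolding dsum_def zo_def by auto

lemma subspace_D:
  assumes H: "hilbert_family m H"
  shows "subspace {X. vf X \<in> dsum m (H :: nat \<Rightarrow> 'a::{real_inner,complete_space} set)}"
  unfolding subspace_def
proof (intro conjI ballI allI)
  have Hs: "subspace (H i)" if "i \<in> {1..m}" for i using H that unfolding hilbert_family_def by auto
  show "0 \<in> {X. vf X \<in> dsum m H}"
    using Hs by (simp add: zero_fsv.rep_eq dsum_def subspace_0)
  show "x + y \<in> {X. vf X \<in> dsum m H}" if "x \<in> {X. vf X \<in> dsum m H}" "y \<in> {X. vf X \<in> dsum m H}" for x y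
    using that Hs by (auto simp: plus_fsv.rep_eq dsum_def subspace_add)
  show "c *\<^sub>R x \<in> {X. vf X \<in> dsum m H}" if "x \<in> {X. vf X \<in> dsum m H}" for c x
    using that Hs by (auto simp: scaleR_fsv.rep_eq dsum_def subspace_scale)
qed

lemma complete_D:
  assumes H: "hilbert_family m H"
  shows "complete {X. vf X \<in> dsum m (H :: nat \<Rightarrow> 'a::{real_inner,complete_space} set)}"
  unfolding complete_def
proof (intro allI impI)
  fix X :: "nat \<Rightarrow> 'a fsv"
  assume a: "(\<forall>n. X n \<in> {X. vf X \<in> dsum m H}) \<and> Cauchy X"
  have Hc: "closed (H i)" if "i \<in> {1..m}" for i using H that unfolding hilbert_family_def by auto
  have "\<exists>L. (\<lambda>n. vf (X n) i) \<longlonglongrightarrow> L" for i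
  proof -
    have "Cauchy (\<lambda>n. vf (X n) i)"
    proof (rule metric_CauchyI)
      fix e :: real assume "e > 0"
      then obtain M where M: "\<And>m n. m \<ge> M \<Longrightarrow> n \<ge> M \<Longrightarrow> dist (X m) (X n) < e"
        using a unfolding Cauchy_def by blast
      have "dist (vf (X m) i) (vf (X n) i) < e" if "m \<ge> M" "n \<ge> M" for m n
      proof -
        have "dist (vf (X m) i) (vf (X n) i) = norm (vf (X m - X n) i)"
          by (simp add: dist_norm minus_fsv.rep_eq)
        also have "\<dots> \<le> norm (X m - X n)" by (rule comp_le)
        also have "\<dots> < e" using M[OF that] by (simp add: dist_norm)
        finally show ?thesis .
      qed
      then show "\<exists>M. \<forall>m\<ge>M. \<forall>n\<ge>M. dist (vf (X m) i) (vf (X n) i) < e" by blast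
    qed
    then show ?thesis by (simp add: convergent_eq_Cauchy)
  qed
  define Lf where "Lf i = lim (\<lambda>n. vf (X n) i)" for i
  have Lf: "(\<lambda>n. vf (X n) i) \<longlonglongrightarrow> Lf i" for i
    unfolding Lf_def using \<open>\<And>i. \<exists>L. (\<lambda>n. vf (X n) i) \<longlonglongrightarrow> L\<close>[of i]
    by (simp add: convergent_LIMSEQ_iff[symmetric] convergent_def)
  define l where "l i = (if i \<in> {1..m} then Lf i else 0)" for i
  have ld: "l \<in> dsum m H"
    unfolding dsum_def
  proof (intro CollectI conjI ballI allI impI)
    fix i assume i: "i \<in> {1..m}"
    have inH: "vf (X n) i \<in> H i" for n using a i unfolding dsum_def by auto
    have "Lf i \<in> H i" by (rule closed_sequentially[OF Hc[OF i] inH Lf[of i]])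
    then show "l i \<in> H i" using i unfolding l_def by simp
  next
    fix i assume ni: "i \<notin> {1..m}" show "l i = 0" unfolding l_def if_not_P[OF ni] by (rule refl)
  qed
  have zl: "zo m l" using ld by (rule dsum_zo)
  have vl: "vf (mkv l) = l" using zl by (rule vf_mkv)
  have zX: "zo m (vf (X n))" for n using a dsum_zo by blast
  have nrm: "norm (X n - mkv l) = sqrt (\<Sum>i\<in>{1..m}. (norm (vf (X n) i - l i))\<^sup>2)" for n
  proof -
    have vv: "vf (X n - mkv l) = (\<lambda>i. vf (X n) i - l i)" by (simp add: minus_fsv.rep_eq vl)
    have "zo m (vf (X n - mkv l))" unfolding vv using zX[of n] zl by (simp add: zo_def)
    then have "(norm (X n - mkv l))\<^sup>2 = dnorm2 m (\<lambda>i. vf (X n) i - l i)" by (simp add: normsq_zo vv)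
    then show ?thesis unfolding dnorm2_def by (metis norm_ge_zero real_sqrt_unique)
  qed
  have "(\<lambda>n. sqrt (\<Sum>i\<in>{1..m}. (norm (vf (X n) i - l i))\<^sup>2)) \<longlonglongrightarrow> sqrt (\<Sum>i\<in>{1..m}. (norm (l i - l i))\<^sup>2)"
  proof (intro tendsto_intros)
    fix i assume "i \<in> {1..m}"
    then show "(\<lambda>n. vf (X n) i) \<longlonglongrightarrow> l i" using Lf[of i] unfolding l_def by simp
  qed
  then have "(\<lambda>n. norm (X n - mkv l)) \<longlonglongrightarrow> 0" unfolding nrm by simp
  then have "X \<longlonglongrightarrow> mkv l" by (simp add: tendsto_norm_zero_iff LIM_zero_iff)
  moreover have "mkv l \<in> {X. vf X \<in> dsum m H}" using vl ld by simp
  ultimately show "\<exists>L\<in>{X. vf X \<in> dsum m H}. X \<longlonglongrightarrow> L" by blast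
qed

lemma sum_single_nz:
  assumes "i \<in> A" "finite A" "\<And>j. j \<in> A \<Longrightarrow> j \<noteq> i \<Longrightarrow> F j = (0::real)"
  shows "(\<Sum>j\<in>A. F j) = F i"
proof -
  have "(\<Sum>j\<in>A. F j) = F i + (\<Sum>j\<in>A - {i}. F j)" using assms by (simp add: sum.remove)
  also have "(\<Sum>j\<in>A - {i}. F j) = 0" using assms(3) by (intro sum.neutral) auto
  finally show ?thesis by simp
qed

lemma nash_part:
  fixes H :: "nat \<Rightarrow> ('a::{real_inner,complete_space}) set"
    and g :: "nat \<Rightarrow> (nat \<Rightarrow> 'a) \<Rightarrow> real" and G :: "nat \<Rightarrow> (nat \<Rightarrow> 'a) \<Rightarrow> 'a"
  assumes H: "hilbert_family m H"
    and grad: "\<And>w i. w \<in> dsum m H \<Longrightarrow> i \<in> {1..m} \<Longrightarrow>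
                 G i w \<in> H i \<and>
                 ((\<lambda>t. g i (w(i := t))) has_derivative (\<lambda>h. inner (G i w) h)) (at (w i) within H i)"
    and mono: "\<And>u v. u \<in> dsum m H \<Longrightarrow> v \<in> dsum m H \<Longrightarrow>
                 (\<Sum>i\<in>{1..m}. inner (G i u - G i v) (u i - v i)) \<ge> 0"
    and xb: "xb \<in> dsum m H" and i: "i \<in> {1..m}" and t: "t \<in> H i"
    and vi: "inner (t - xb i) (G i xb) \<ge> 0"
  shows "g i xb \<le> g i (xb(i := t))"
proof -
  have Hs: "subspace (H i)" using H i unfolding hilbert_family_def by auto
  have xbi: "xb i \<in> H i" using xb i unfolding dsum_def by auto
  define d where "d = t - xb i"
  have dH: "d \<in> H i" unfolding d_def using Hs t xbi by (rule subspace_diff)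
  define f where "f \<tau> = xb i + \<tau> *\<^sub>R d" for \<tau> :: real
  have fH: "f \<tau> \<in> H i" for \<tau> unfolding f_def using Hs xbi dH by (simp add: subspace_add subspace_scale)
  define w where "w \<tau> = xb(i := f \<tau>)" for \<tau>
  have wD: "w \<tau> \<in> dsum m H" for \<tau> using xb fH i unfolding w_def dsum_def by auto
  define \<psi> where "\<psi> \<tau> = g i (xb(i := f \<tau>))" for \<tau>
  have der: "(\<psi> has_real_derivative inner (G i (w \<tau>)) d) (at \<tau>)" for \<tau>
  proof -
    have g1: "((\<lambda>s. g i ((w \<tau>)(i := s))) has_derivative (\<lambda>h. inner (G i (w \<tau>)) h)) (at ((w \<tau>) i) within H i)"
      using grad[OF wD i] by blast
    have g2: "((\<lambda>s. g i (xb(i := s))) has_derivative (\<lambda>h. inner (G i (w \<tau>)) h)) (at (f \<tau>) within f ` UNIV)"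
      using has_derivative_subset[OF g1, of "f ` UNIV"] fH unfolding w_def by auto
    have f1: "(f has_derivative (\<lambda>h. h *\<^sub>R d)) (at \<tau>)"
      unfolding f_def by (auto intro!: derivative_eq_intros)
    have "((\<lambda>x. g i (xb(i := f x))) has_derivative (\<lambda>h. inner (G i (w \<tau>)) (h *\<^sub>R d))) (at \<tau>)"
      using has_derivative_in_compose[OF f1 g2] by simp
    moreover have "(\<lambda>h. inner (G i (w \<tau>)) (h *\<^sub>R d)) = (*) (inner (G i (w \<tau>)) d)"
      by (auto simp: mult.commute)
    ultimately show ?thesis unfolding has_field_derivative_def \<psi>_def by simp
  qed
  have nn: "inner (G i (w \<tau>)) d \<ge> 0" if "\<tau> \<in> {0..1}" for \<tau>
  proof (cases "\<tau> = 0")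
    case True
    then have "w \<tau> = xb" unfolding w_def f_def by auto
    then show ?thesis using vi unfolding d_def by (simp add: inner_commute)
  next
    case False
    then have tp: "\<tau> > 0" using that by auto
    have "0 \<le> (\<Sum>j\<in>{1..m}. inner (G j (w \<tau>) - G j xb) (w \<tau> j - xb j))" by (rule mono[OF wD xb])
    also have "\<dots> = inner (G i (w \<tau>) - G i xb) (w \<tau> i - xb i)"
      by (rule sum_single_nz[OF i]) (auto simp: w_def)
    also have "\<dots> = \<tau> * (inner (G i (w \<tau>)) d - inner (G i xb) d)"
      unfolding w_def f_def by (simp add: inner_diff_left)
    finally have "inner (G i xb) d \<le> inner (G i (w \<tau>)) d" using tp by (simp add: zero_le_mult_iff)
    moreover have "inner (G i xb) d \<ge> 0" using vi unfolding d_def by (simp add: inner_commute)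
    ultimately show ?thesis by linarith
  qed
  have "\<psi> 0 \<le> \<psi> 1"
    by (rule deriv_nonneg_imp_mono[where a = 0 and b = 1 and g' = "\<lambda>\<tau>. inner (G i (w \<tau>)) d"])
      (use der nn in auto)
  moreover have "\<psi> 0 = g i xb" unfolding \<psi>_def f_def by simp
  moreover have "\<psi> 1 = g i (xb(i := t))" unfolding \<psi>_def f_def d_def by simp
  ultimately show ?thesis by simp
qed

theorem proposition4p5:
  fixes m :: nat
    and H :: "nat \<Rightarrow> ('a::{real_inner,complete_space}) set"
    and C :: "(nat \<Rightarrow> 'a) set"
    and g :: "nat \<Rightarrow> (nat \<Rightarrow> 'a) \<Rightarrow> real"
    and G :: "nat \<Rightarrow> (nat \<Rightarrow> 'a) \<Rightarrow> 'a"
    and z :: "nat \<Rightarrow> 'a"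
    and \<kappa> \<epsilon> :: real
    and \<gamma> :: "nat \<Rightarrow> real"
    and x y p q a b c :: "nat \<Rightarrow> nat \<Rightarrow> 'a"
  assumes m: "m \<ge> 2"
    and H: "hilbert_family m H"
    and C_sub: "C \<subseteq> dsum m H" and C_ne: "C \<noteq> {}"
    and C_closed: "dclosed m H C" and C_convex: "dconvex C"
    and grad: "\<And>w i. w \<in> dsum m H \<Longrightarrow> i \<in> {1..m} \<Longrightarrow>
                 G i w \<in> H i \<and>
                 ((\<lambda>t. g i (w(i := t))) has_derivative (\<lambda>h. inner (G i w) h)) (at (w i) within H i)"
    and mono: "\<And>u v. u \<in> dsum m H \<Longrightarrow> v \<in> dsum m H \<Longrightarrow>
                 (\<Sum>i\<in>{1..m}. inner (G i u - G i v) (u i - v i)) \<ge> 0"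
    and z: "z \<in> dsum m H" "(\<lambda>i. if i \<in> {1..m} then - G i z else 0) \<in> normal_cone m C z"
    and chi: "\<kappa> > 0"
    and lip: "\<And>u v. u \<in> dsum m H \<Longrightarrow> v \<in> dsum m H \<Longrightarrow>
                 (\<Sum>i\<in>{1..m}. (norm (G i u - G i v))\<^sup>2) \<le> \<kappa>\<^sup>2 * (\<Sum>i\<in>{1..m}. (norm (u i - v i))\<^sup>2)"
    and eps: "0 < \<epsilon>" "\<epsilon> < 1 / (\<kappa> + 1)"
    and gamma: "\<And>n. \<epsilon> \<le> \<gamma> n \<and> \<gamma> n \<le> (1 - \<epsilon>) / \<kappa>"
    and x0: "x 0 \<in> dsum m H"
    and abc: "\<And>n i. i \<in> {1..m} \<Longrightarrow> a n i \<in> H i \<and> b n i \<in> H i \<and> c n i \<in> H i"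
    and abc_sum: "\<And>i. i \<in> {1..m} \<Longrightarrow> summable (\<lambda>n. norm (a n i)) \<and>
                    summable (\<lambda>n. norm (b n i)) \<and> summable (\<lambda>n. norm (c n i))"
    and y_def: "\<And>n i. y n i = (if i \<in> {1..m} then x n i - \<gamma> n *\<^sub>R (G i (x n) + a n i) else 0)"
    and p_def: "\<And>n i. p n i = (if i \<in> {1..m} then dproj m C (y n) i + b n i else 0)"
    and q_def: "\<And>n i. q n i = (if i \<in> {1..m} then p n i - \<gamma> n *\<^sub>R (G i (p n) + c n i) else 0)"
    and x_def: "\<And>n i. x (Suc n) i = (if i \<in> {1..m} then x n i - y n i + q n i else 0)"
  shows "\<exists>xb \<in> dsum m H.
           (\<forall>i\<in>{1..m}. xb i \<in> Argmin (\<lambda>t. g i (xb(i := t))) (Qset i H C xb)) \<and>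
           (\<forall>i\<in>{1..m}. weakly_converges (\<lambda>n. x n i) (xb i) \<and>
                        weakly_converges (\<lambda>n. p n i) (xb i))"
proof -
  define D where "D = {X :: 'a fsv. vf X \<in> dsum m H}"
  define C' where "C' = {X :: 'a fsv. vf X \<in> C}"
  define B' where "B' X = mkv (\<lambda>i. if i \<in> {1..m} then G i (vf X) else 0)" for X :: "'a fsv"
  define P' where "P' X = mkv (dproj m C (vf X))" for X :: "'a fsv"
  define ar where "ar n i = (if i \<in> {1..m} then a n i else 0)" for n i
  define br where "br n i = (if i \<in> {1..m} then b n i else 0)" for n i
  define cr where "cr n i = (if i \<in> {1..m} then c n i else 0)" for n i
  have zo_if: "zo m (\<lambda>i. if i \<in> {1..m} then F i else 0)" for F :: "nat \<Rightarrow> 'a"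
    unfolding zo_def by simp
  have Csub: "\<And>u. u \<in> C \<Longrightarrow> u \<in> dsum m H" using C_sub by blast
  have Czo: "zo m u" if "u \<in> C" for u using Csub[OF that] by (rule dsum_zo)
  have subD: "subspace D" unfolding D_def using H by (rule subspace_D)
  have compD: "complete D" unfolding D_def using H by (rule complete_D)
  have CD: "C' \<subseteq> D" unfolding C'_def D_def using C_sub by auto
  have convC: "convex C'"
    unfolding convex_def C'_def
  proof (intro ballI allI impI, clarsimp)
    fix X Y :: "'a fsv" and u v :: real
    assume XY: "vf X \<in> C" "vf Y \<in> C" and uv: "0 \<le> u" "0 \<le> v" "u + v = 1"
    have "(\<lambda>i. (1 - v) *\<^sub>R vf X i + v *\<^sub>R vf Y i) \<in> C"
      using C_convex XY uv unfolding dconvex_def by auto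
    moreover have "u = 1 - v" using uv by simp
    ultimately show "vf (u *\<^sub>R X + v *\<^sub>R Y) \<in> C"
      by (simp add: plus_fsv.rep_eq scaleR_fsv.rep_eq)
  qed
  have vf_mkvC: "vf (mkv u) = u" if "u \<in> C" for u using Czo[OF that] by (rule vf_mkv)
  have Cne: "C' \<noteq> {}"
  proof -
    obtain u where "u \<in> C" using C_ne by blast
    then have "mkv u \<in> C'" unfolding C'_def using vf_mkvC by simp
    then show ?thesis by blast
  qed
  have compC: "complete C'"
    unfolding complete_def
  proof (intro allI impI)
    fix X :: "nat \<Rightarrow> 'a fsv" assume a1: "(\<forall>n. X n \<in> C') \<and> Cauchy X"
    then obtain L where L: "L \<in> D" "X \<longlonglongrightarrow> L" using compD CD unfolding complete_def by blast
    have zL: "zo m (vf L)" using L(1) unfolding D_def by (simp add: dsum_zo)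
    have "vf L \<in> C"
    proof -
      have zz: "zo m (vf (X n - L))" for n
        using a1 zL Czo unfolding C'_def zo_def by (auto simp: minus_fsv.rep_eq)
      have "sqrt (dnorm2 m (\<lambda>i. vf (X n) i - vf L i)) = norm (X n - L)" for n
      proof -
        have "(norm (X n - L))\<^sup>2 = dnorm2 m (\<lambda>i. vf (X n) i - vf L i)"
          using normsq_zo[OF zz[of n]] by (simp add: minus_fsv.rep_eq)
        then show ?thesis by (metis norm_ge_zero real_sqrt_unique)
      qed
      moreover have "(\<lambda>n. norm (X n - L)) \<longlonglongrightarrow> 0" using L(2) by (simp add: tendsto_norm_zero_iff LIM_zero_iff)
      ultimately have t3: "(\<lambda>n. sqrt (dnorm2 m (\<lambda>i. vf (X n) i - vf L i))) \<longlonglongrightarrow> 0" by simp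
      have t1: "\<forall>n. vf (X n) \<in> C" using a1 unfolding C'_def by auto
      have t2: "vf L \<in> dsum m H" using L(1) unfolding D_def by simp
      have cl: "\<And>s zz. (\<forall>n. s n \<in> C) \<Longrightarrow> zz \<in> dsum m H \<Longrightarrow>
          (\<lambda>n. sqrt (dnorm2 m (\<lambda>i. s n i - zz i))) \<longlonglongrightarrow> 0 \<Longrightarrow> zz \<in> C"
        using C_closed unfolding dclosed_def by blast
      show ?thesis using cl[of "\<lambda>n. vf (X n)" "vf L"] t1 t2 t3 by simp
    qed
    then show "\<exists>l\<in>C'. X \<longlonglongrightarrow> l" using L(2) unfolding C'_def by blast
  qed
  have Pmin: "P' U \<in> C' \<and> (\<forall>V\<in>C'. norm (U - P' U) \<le> norm (U - V)) \<and> vf (P' U) = dproj m C (vf U)"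
    if zU: "zo m (vf U)" for U
  proof -
    obtain p0 where p0: "p0 \<in> C'" "\<And>V. V \<in> C' \<Longrightarrow> norm (U - p0) \<le> norm (U - V)"
      using proj_exists[OF convC compC Cne, of U] by blast
    have nz: "(norm (U - V))\<^sup>2 = dnorm2 m (\<lambda>i. vf U i - vf V i)" if "vf V \<in> C" for V
    proof -
      have "zo m (vf (U - V))" using zU Czo[OF that] unfolding zo_def by (simp add: minus_fsv.rep_eq)
      from normsq_zo[OF this] show ?thesis by (simp add: minus_fsv.rep_eq)
    qed
    have ex: "\<exists>pp. pp \<in> C \<and> (\<forall>cc\<in>C. dnorm2 m (\<lambda>i. vf U i - pp i) \<le> dnorm2 m (\<lambda>i. vf U i - cc i))"
    proof (intro exI conjI ballI)
      show "vf p0 \<in> C" using p0(1) unfolding C'_def by simp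
      fix cc assume cc: "cc \<in> C"
      have "mkv cc \<in> C'" unfolding C'_def using vf_mkvC[OF cc] cc by simp
      then have "norm (U - p0) \<le> norm (U - mkv cc)" by (rule p0(2))
      then have "(norm (U - p0))\<^sup>2 \<le> (norm (U - mkv cc))\<^sup>2" by (simp add: power_mono)
      then show "dnorm2 m (\<lambda>i. vf U i - vf p0 i) \<le> dnorm2 m (\<lambda>i. vf U i - cc i)"
        using nz[of p0] nz[of "mkv cc"] p0(1) cc vf_mkvC[OF cc] unfolding C'_def by simp
    qed
    have dp: "dproj m C (vf U) \<in> C \<and> (\<forall>cc\<in>C. dnorm2 m (\<lambda>i. vf U i - dproj m C (vf U) i) \<le> dnorm2 m (\<lambda>i. vf U i - cc i))"
      unfolding dproj_def by (rule someI_ex[OF ex])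
    have vP: "vf (P' U) = dproj m C (vf U)" unfolding P'_def using dp vf_mkvC by blast
    have PC': "P' U \<in> C'" unfolding C'_def using vP dp by simp
    have "norm (U - P' U) \<le> norm (U - V)" if V: "V \<in> C'" for V
    proof -
      have "(norm (U - P' U))\<^sup>2 \<le> (norm (U - V))\<^sup>2"
        using nz[of "P' U"] nz[of V] dp V PC' vP unfolding C'_def by simp
      then show ?thesis by (rule power2_le_imp_le) simp
    qed
    then show ?thesis using PC' vP by blast
  qed
  have zD: "zo m (vf U)" if "U \<in> D" for U using that unfolding D_def by (simp add: dsum_zo)
  have PC: "P' U \<in> C'" if "U \<in> D" for U using Pmin[OF zD[OF that]] by blast
  have Pvi: "inner (V - P' U) (U - P' U) \<le> 0" if "U \<in> D" "V \<in> C'" for U V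
    using proj_vi[OF convC _ _ that(2)] Pmin[OF zD[OF that(1)]] by blast
  have vB: "vf (B' X) = (\<lambda>i. if i \<in> {1..m} then G i (vf X) else 0)" for X
    unfolding B'_def by (rule vf_mkv[OF zo_if])
  have BD: "B' U \<in> D" if "U \<in> D" for U
    using that grad unfolding D_def by (auto simp: vB dsum_def)
  have Bdiff: "vf (B' U - B' V) = (\<lambda>i. if i \<in> {1..m} then G i (vf U) - G i (vf V) else 0)" for U V
    by (auto simp: minus_fsv.rep_eq vB)
  have zBd: "zo m (vf (B' U - B' V))" for U V unfolding Bdiff by (rule zo_if)
  have monoB: "inner (B' U - B' V) (U - V) \<ge> 0" if "U \<in> D" "V \<in> D" for U V
  proof -
    have "inner (B' U - B' V) (U - V) = (\<Sum>i\<in>{1..m}. inner (G i (vf U) - G i (vf V)) (vf U i - vf V i))"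
    proof -
      have "inner (B' U - B' V) (U - V) = (\<Sum>i\<in>{1..m}. inner (vf (B' U - B' V) i) (vf (U - V) i))"
        by (rule inner_zo[OF zBd])
      also have "\<dots> = (\<Sum>i\<in>{1..m}. inner (G i (vf U) - G i (vf V)) (vf U i - vf V i))"
        by (rule sum.cong) (simp_all add: vB minus_fsv.rep_eq)
      finally show ?thesis .
    qed
    then show ?thesis using mono[of "vf U" "vf V"] that unfolding D_def by simp
  qed
  have lipB: "norm (B' U - B' V) \<le> \<kappa> * norm (U - V)" if "U \<in> D" "V \<in> D" for U V
  proof -
    have zUV: "zo m (vf (U - V))" using zD[OF that(1)] zD[OF that(2)] unfolding zo_def
      by (simp add: minus_fsv.rep_eq)
    have "(norm (B' U - B' V))\<^sup>2 = (\<Sum>i\<in>{1..m}. (norm (G i (vf U) - G i (vf V)))\<^sup>2)"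
    proof -
      have "(norm (B' U - B' V))\<^sup>2 = (\<Sum>i\<in>{1..m}. (norm (vf (B' U - B' V) i))\<^sup>2)"
        using normsq_zo[OF zBd] unfolding dnorm2_def .
      also have "\<dots> = (\<Sum>i\<in>{1..m}. (norm (G i (vf U) - G i (vf V)))\<^sup>2)"
        by (rule sum.cong) (simp_all add: vB minus_fsv.rep_eq)
      finally show ?thesis .
    qed
    also have "\<dots> \<le> \<kappa>\<^sup>2 * (\<Sum>i\<in>{1..m}. (norm (vf U i - vf V i))\<^sup>2)"
      using lip[of "vf U" "vf V"] that unfolding D_def by simp
    also have "\<dots> = (\<kappa> * norm (U - V))\<^sup>2"
      using normsq_zo[OF zUV] unfolding dnorm2_def by (simp add: minus_fsv.rep_eq power_mult_distrib)
    finally show ?thesis by (rule power2_le_imp_le) (use chi in simp)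
  qed
  have zC: "z \<in> C" using z(2) unfolding normal_cone_def by (auto split: if_splits)
  have Zmk: "vf (mkv z) = z" using vf_mkvC[OF zC] .
  have zC': "mkv z \<in> C'" unfolding C'_def using Zmk zC by simp
  have zS: "inner (V - mkv z) (B' (mkv z)) \<ge> 0" if "V \<in> C'" for V
  proof -
    have VC: "vf V \<in> C" using that unfolding C'_def by simp
    have zV: "zo m (vf (V - mkv z))" using Czo[OF VC] Czo[OF zC] Zmk unfolding zo_def
      by (simp add: minus_fsv.rep_eq)
    have "inner (V - mkv z) (B' (mkv z)) = (\<Sum>i\<in>{1..m}. inner (vf V i - z i) (G i z))"
      using inner_zo[OF zV] by (simp add: minus_fsv.rep_eq Zmk vB)
    also have "\<dots> = - dinner m (\<lambda>i. vf V i - z i) (\<lambda>i. if i \<in> {1..m} then - G i z else 0)"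
      unfolding dinner_def by (simp add: sum_negf[symmetric])
    finally show ?thesis using z(2) VC zC unfolding normal_cone_def by auto
  qed
  have zx: "zo m (x n)" for n
  proof (cases n)
    case 0 then show ?thesis using x0 by (simp add: dsum_zo)
  next
    case (Suc k) then show ?thesis unfolding zo_def using x_def by simp
  qed
  have zy: "zo m (y n)" for n unfolding zo_def using y_def by simp
  have zp: "zo m (p n)" for n unfolding zo_def using p_def by simp
  have zq: "zo m (q n)" for n unfolding zo_def using q_def by simp
  define X where "X n = mkv (x n)" for n
  define Y where "Y n = mkv (y n)" for n
  define Pn where "Pn n = mkv (p n)" for n
  define Q where "Q n = mkv (q n)" for n
  define A where "A n = mkv (ar n)" for n
  define Bb where "Bb n = mkv (br n)" for n
  define Cc where "Cc n = mkv (cr n)" for n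
  have vX: "vf (X n) = x n" for n unfolding X_def using zx by (rule vf_mkv)
  have vY: "vf (Y n) = y n" for n unfolding Y_def using zy by (rule vf_mkv)
  have vP: "vf (Pn n) = p n" for n unfolding Pn_def using zp by (rule vf_mkv)
  have vQ: "vf (Q n) = q n" for n unfolding Q_def using zq by (rule vf_mkv)
  have vA: "vf (A n) = ar n" for n unfolding A_def ar_def by (rule vf_mkv[OF zo_if])
  have vBb: "vf (Bb n) = br n" for n unfolding Bb_def br_def by (rule vf_mkv[OF zo_if])
  have vC: "vf (Cc n) = cr n" for n unfolding Cc_def cr_def by (rule vf_mkv[OF zo_if])
  have X0: "X 0 \<in> D" unfolding D_def using vX x0 by simp
  have eD: "A n \<in> D \<and> Bb n \<in> D \<and> Cc n \<in> D" for n
    unfolding D_def using abc by (simp add: vA vBb vC ar_def br_def cr_def dsum_def)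
  have nA: "norm (A n) \<le> (\<Sum>i\<in>{1..m}. norm (a n i))" for n
  proof -
    have "(norm (A n))\<^sup>2 = (\<Sum>i\<in>{1..m}. (norm (a n i))\<^sup>2)"
    proof -
      have z: "zo m (vf (A n))" unfolding vA ar_def by (rule zo_if)
      show ?thesis using normsq_zo[OF z] unfolding dnorm2_def by (simp add: vA ar_def)
    qed
    then have "norm (A n) = L2_set (\<lambda>i. norm (a n i)) {1..m}" unfolding L2_set_def
      by (metis norm_ge_zero real_sqrt_unique)
    then show ?thesis using L2_set_le_sum[of "{1..m}" "\<lambda>i. norm (a n i)"] by simp
  qed
  have nB: "norm (Bb n) \<le> (\<Sum>i\<in>{1..m}. norm (b n i))" for n
  proof -
    have "(norm (Bb n))\<^sup>2 = (\<Sum>i\<in>{1..m}. (norm (b n i))\<^sup>2)"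
    proof -
      have z: "zo m (vf (Bb n))" unfolding vBb br_def by (rule zo_if)
      show ?thesis using normsq_zo[OF z] unfolding dnorm2_def by (simp add: vBb br_def)
    qed
    then have "norm (Bb n) = L2_set (\<lambda>i. norm (b n i)) {1..m}" unfolding L2_set_def
      by (metis norm_ge_zero real_sqrt_unique)
    then show ?thesis using L2_set_le_sum[of "{1..m}" "\<lambda>i. norm (b n i)"] by simp
  qed
  have nC: "norm (Cc n) \<le> (\<Sum>i\<in>{1..m}. norm (c n i))" for n
  proof -
    have "(norm (Cc n))\<^sup>2 = (\<Sum>i\<in>{1..m}. (norm (c n i))\<^sup>2)"
    proof -
      have z: "zo m (vf (Cc n))" unfolding vC cr_def by (rule zo_if)
      show ?thesis using normsq_zo[OF z] unfolding dnorm2_def by (simp add: vC cr_def)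
    qed
    then have "norm (Cc n) = L2_set (\<lambda>i. norm (c n i)) {1..m}" unfolding L2_set_def
      by (metis norm_ge_zero real_sqrt_unique)
    then show ?thesis using L2_set_le_sum[of "{1..m}" "\<lambda>i. norm (c n i)"] by simp
  qed
  have sA: "summable (\<lambda>n. norm (A n))"
    by (rule summable_comparison_test[where g = "\<lambda>n. \<Sum>i\<in>{1..m}. norm (a n i)"])
      (use nA abc_sum in \<open>auto intro!: summable_sum\<close>)
  have sB: "summable (\<lambda>n. norm (Bb n))"
    by (rule summable_comparison_test[where g = "\<lambda>n. \<Sum>i\<in>{1..m}. norm (b n i)"])
      (use nB abc_sum in \<open>auto intro!: summable_sum\<close>)
  have sC: "summable (\<lambda>n. norm (Cc n))"
    by (rule summable_comparison_test[where g = "\<lambda>n. \<Sum>i\<in>{1..m}. norm (c n i)"])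
      (use nC abc_sum in \<open>auto intro!: summable_sum\<close>)
  have Yeq: "Y n = X n - \<gamma> n *\<^sub>R (B' (X n) + A n)" for n
    by (rule vf_inject[THEN iffD1])
      (auto simp: fun_eq_iff vY vX vA vB ar_def y_def minus_fsv.rep_eq plus_fsv.rep_eq scaleR_fsv.rep_eq zx[unfolded zo_def])
  have Peq: "Pn n = P' (Y n) + Bb n" for n
  proof (rule vf_inject[THEN iffD1])
    have zY: "zo m (vf (Y n))" using zy vY by simp
    have pr: "vf (P' (Y n)) = dproj m C (y n)" "P' (Y n) \<in> C'" using Pmin[OF zY] vY by auto
    have "zo m (dproj m C (y n))" using pr unfolding C'_def by (metis Czo mem_Collect_eq)
    then show "vf (Pn n) = vf (P' (Y n) + Bb n)"
      by (auto simp: vP plus_fsv.rep_eq pr vBb br_def p_def zo_def)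
  qed
  have Qeq: "Q n = Pn n - \<gamma> n *\<^sub>R (B' (Pn n) + Cc n)" for n
    by (rule vf_inject[THEN iffD1])
      (auto simp: fun_eq_iff vQ vP vC vB cr_def q_def minus_fsv.rep_eq plus_fsv.rep_eq scaleR_fsv.rep_eq zp[unfolded zo_def])
  have Xeq: "X (Suc n) = X n - Y n + Q n" for n
    by (rule vf_inject[THEN iffD1])
      (auto simp: vQ vX vY x_def minus_fsv.rep_eq plus_fsv.rep_eq fun_eq_iff zx[unfolded zo_def] zy[unfolded zo_def] zq[unfolded zo_def])
  obtain xb where xb: "xb \<in> C'" "\<And>V. V \<in> C' \<Longrightarrow> inner (V - xb) (B' xb) \<ge> 0"
    "weakly_converges X xb" "weakly_converges Pn xb"
    using tseng_abs[OF subD compD CD convC PC Pvi BD monoB lipB zC' zS chi eps gamma X0 eD sA sB sC Yeq Peq Qeq Xeq]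
    by blast
  define xbf where "xbf = vf xb"
  have xbC: "xbf \<in> C" using xb(1) unfolding C'_def xbf_def by simp
  have xbD: "xbf \<in> dsum m H" using Csub[OF xbC] .
  have wk: "weakly_converges (\<lambda>n. s n i) (xbf i)" if ws: "weakly_converges S xb"
    and vs: "\<And>n. vf (S n) = s n" for S :: "nat \<Rightarrow> 'a fsv" and s i
    unfolding weakly_converges_def
  proof
    fix w
    have "(\<lambda>n. inner (S n) (mkv (\<lambda>j. if j = i then w else 0))) \<longlonglongrightarrow> inner xb (mkv (\<lambda>j. if j = i then w else 0))"
      using ws unfolding weakly_converges_def by blast
    then show "(\<lambda>n. inner (s n i) w) \<longlonglongrightarrow> inner (xbf i) w"
      by (simp add: inner_delta vs xbf_def)
  qed
  have argmin: "xbf i \<in> Argmin (\<lambda>t. g i (xbf(i := t))) (Qset i H C xbf)" if i: "i \<in> {1..m}" for i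
  proof -
    have mem: "xbf i \<in> Qset i H C xbf" using xbD xbC i unfolding Qset_def dsum_def by auto
    have "g i xbf \<le> g i (xbf(i := t))" if t: "t \<in> Qset i H C xbf" for t
    proof (rule nash_part[OF H grad mono xbD i])
      show tH: "t \<in> H i" using t unfolding Qset_def by simp
      have tC: "xbf(i := t) \<in> C" using t unfolding Qset_def by simp
      have V: "mkv (xbf(i := t)) \<in> C'" unfolding C'_def using vf_mkvC[OF tC] tC by simp
      have "0 \<le> inner (mkv (xbf(i := t)) - xb) (B' xb)" by (rule xb(2)[OF V])
      also have "\<dots> = (\<Sum>j\<in>{1..m}. inner ((xbf(i := t)) j - xbf j) (G j xbf))"
      proof -
        have e1: "vf (mkv (xbf(i := t))) = xbf(i := t)" by (rule vf_mkvC[OF tC])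
        have vxb: "vf xb = xbf" unfolding xbf_def ..
        have vd: "vf (mkv (xbf(i := t)) - xb) = (\<lambda>j. (xbf(i := t)) j - xbf j)"
          by (simp add: minus_fsv.rep_eq e1 vxb)
        have zz: "zo m (vf (mkv (xbf(i := t)) - xb))"
          using Czo[OF tC] Czo[OF xbC] unfolding vd zo_def by simp
        have "inner (mkv (xbf(i := t)) - xb) (B' xb)
            = (\<Sum>j\<in>{1..m}. inner (vf (mkv (xbf(i := t)) - xb) j) (vf (B' xb) j))"
          by (rule inner_zo[OF zz])
        also have "\<dots> = (\<Sum>j\<in>{1..m}. inner ((xbf(i := t)) j - xbf j) (G j xbf))"
          by (rule sum.cong) (simp_all add: vd vB vxb)
        finally show ?thesis .
      qed
      also have "\<dots> = inner (t - xbf i) (G i xbf)"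
        by (subst sum_single_nz[OF i]) auto
      finally show "0 \<le> inner (t - xbf i) (G i xbf)" .
    qed
    then show ?thesis using mem unfolding Argmin_def by auto
  qed
  show ?thesis
  proof (intro bexI[of _ xbf] conjI ballI)
    show "xbf \<in> dsum m H" by (rule xbD)
    show "xbf i \<in> Argmin (\<lambda>t. g i (xbf(i := t))) (Qset i H C xbf)" if "i \<in> {1..m}" for i
      using argmin[OF that] .
    show "weakly_converges (\<lambda>n. x n i) (xbf i)" for i by (rule wk[OF xb(3) vX])
    show "weakly_converges (\<lambda>n. p n i) (xbf i)" for i by (rule wk[OF xb(4) vP])
  qed
qed

end
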